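(* Let $m\geq1$ and $0\leq r_1<r_2\leq m$, and let $q=p^t$ be a power of an odd prime $p$, $t\geq1$. Then there exists an asymmetric quantum code with parameters $[[t2^m,\ t[k(r_2)-k(r_1)],\ d_z/d_x]]_p$, where $k(r)=\sum_{i=0}^{r}\binom{m}{i}$, $d_z\geq 2^{m-r_2}$ and $d_x\geq 2^{r_1+1}$.
   Context: An AQECC $[[n,k,d_z/d_x]]_p$ is a $p^k$-dimensional subspace of $\mathbb{C}^{p^n}$ correcting all qudit-flip errors up to $\lfloor (d_x-1)/2\rfloor$ and all phase-shift errors up to $\lfloor (d_z-1)/2\rfloor$. *)

theory Defs
  imports "Jordan_Normal_Form.VS_Connect" "HOL-Computational_Algebra.Primes"
begin

text \<open>The computational basis of (C^p)^{\<otimes> n} = C^(p^n) is indexed by i < p^n;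
  the j-th qudit (digit) of basis index i is (i div p^j) mod p.
  Vectors are Jordan_Normal_Form vectors of dimension p^n.\<close>

definition qdigit :: "nat \<Rightarrow> nat \<Rightarrow> nat \<Rightarrow> nat" where
  "qdigit p i j = (i div p ^ j) mod p"

definition Fp_vec :: "nat \<Rightarrow> nat \<Rightarrow> (nat \<Rightarrow> nat) \<Rightarrow> bool" where
  "Fp_vec p n a \<longleftrightarrow> (\<forall>l<n. a l < p)"

definition hweight :: "nat \<Rightarrow> (nat \<Rightarrow> nat) \<Rightarrow> nat" where
  "hweight n a = card {l. l < n \<and> a l \<noteq> 0}"

text \<open>Qudit-flip operator X(a): |x> \<mapsto> |x + a>.\<close>
definition Xop :: "nat \<Rightarrow> nat \<Rightarrow> (nat \<Rightarrow> nat) \<Rightarrow> complex mat" where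
  "Xop p n a = mat (p ^ n) (p ^ n)
     (\<lambda>(i, j). if (\<forall>l<n. qdigit p i l = (qdigit p j l + a l) mod p) then 1 else 0)"

text \<open>Phase-shift operator Z(b): |x> \<mapsto> \<omega>^(b\<cdot>x) |x>, \<omega> = exp(2\<pi>i/p).\<close>
definition Zop :: "nat \<Rightarrow> nat \<Rightarrow> (nat \<Rightarrow> nat) \<Rightarrow> complex mat" where
  "Zop p n b = mat (p ^ n) (p ^ n)
     (\<lambda>(i, j). if i = j then cis (2 * pi / real p) ^ (\<Sum>l<n. b l * qdigit p j l) else 0)"

definition error_set :: "nat \<Rightarrow> nat \<Rightarrow> nat \<Rightarrow> nat \<Rightarrow> complex mat set" where
  "error_set p n ex ez =
     {Xop p n a * Zop p n b | a b. Fp_vec p n a \<and> Fp_vec p n b \<and>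
                                   hweight n a \<le> ex \<and> hweight n b \<le> ez}"

definition cinner :: "complex vec \<Rightarrow> complex vec \<Rightarrow> complex" where
  "cinner u v = (\<Sum>i<dim_vec u. cnj (u $ i) * v $ i)"

text \<open>Q corrects the error set E (Knill-Laflamme condition):
  for all E1, E2 \<in> E there is a constant c with <E1 u|E2 v> = c <u|v> for all u, v \<in> Q.\<close>
definition corrects :: "complex vec set \<Rightarrow> complex mat set \<Rightarrow> bool" where
  "corrects Q E \<longleftrightarrow> (\<forall>E1\<in>E. \<forall>E2\<in>E. \<exists>c::complex. \<forall>u\<in>Q. \<forall>v\<in>Q.
       cinner (E1 *\<^sub>v u) (E2 *\<^sub>v v) = c * cinner u v)"

definition is_AQECC :: "nat \<Rightarrow> nat \<Rightarrow> nat \<Rightarrow> nat \<Rightarrow> nat \<Rightarrow> complex vec set \<Rightarrow> bool" where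
  "is_AQECC p n k dz dx Q \<longleftrightarrow>
     subspace class_ring Q (module_vec TYPE(complex) (p ^ n)) \<and>
     vectorspace.dim class_ring ((module_vec TYPE(complex) (p ^ n))\<lparr>carrier := Q\<rparr>) = p ^ k \<and>
     corrects Q (error_set p n ((dx - 1) div 2) ((dz - 1) div 2))"

definition kRM :: "nat \<Rightarrow> nat \<Rightarrow> nat" where
  "kRM m r = (\<Sum>i = 0..r. m choose i)"

end

theory Submission
  imports Defs "Jordan_Normal_Form.DL_Rank"
begin


locale pv =
  fixes p :: nat
  assumes p2: "2 \<le> p"
begin

abbreviation P where "P \<equiv> int p"

definition Vs :: "nat \<Rightarrow> (nat \<Rightarrow> int) set" where
  "Vs L = {x. \<forall>l. (l < L \<longrightarrow> 0 \<le> x l \<and> x l < P) \<and> (L \<le> l \<longrightarrow> x l = 0)}"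
definition vadd :: "(nat \<Rightarrow> int) \<Rightarrow> (nat \<Rightarrow> int) \<Rightarrow> (nat \<Rightarrow> int)" where
  "vadd x y = (\<lambda>l. (x l + y l) mod P)"
definition vneg :: "(nat \<Rightarrow> int) \<Rightarrow> (nat \<Rightarrow> int)" where
  "vneg x = (\<lambda>l. (- x l) mod P)"
definition vsub :: "(nat \<Rightarrow> int) \<Rightarrow> (nat \<Rightarrow> int) \<Rightarrow> (nat \<Rightarrow> int)" where
  "vsub x y = (\<lambda>l. (x l - y l) mod P)"
definition zv :: "nat \<Rightarrow> int" where "zv = (\<lambda>_. 0)"
definition dot :: "nat \<Rightarrow> (nat \<Rightarrow> int) \<Rightarrow> (nat \<Rightarrow> int) \<Rightarrow> int" where
  "dot L x y = (\<Sum>l<L. x l * y l)"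
definition wt :: "nat \<Rightarrow> (nat \<Rightarrow> int) \<Rightarrow> nat" where
  "wt L x = card {l. l < L \<and> x l \<noteq> 0}"
definition comp where "comp L A = {x \<in> Vs L. \<forall>y\<in>A. dot L x y mod P = 0}"
definition grp where "grp L A \<longleftrightarrow> A \<subseteq> Vs L \<and> zv \<in> A \<and>
   (\<forall>x\<in>A. \<forall>y\<in>A. vadd x y \<in> A) \<and> (\<forall>x\<in>A. vneg x \<in> A)"
definition lo :: "nat \<Rightarrow> (nat \<Rightarrow> int) \<Rightarrow> (nat \<Rightarrow> int)" where "lo L z = (\<lambda>l. if l < L then z l else 0)"
definition hi :: "nat \<Rightarrow> (nat \<Rightarrow> int) \<Rightarrow> (nat \<Rightarrow> int)" where "hi L z = (\<lambda>l. z (l + L))"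
definition cat :: "nat \<Rightarrow> (nat \<Rightarrow> int) \<Rightarrow> (nat \<Rightarrow> int) \<Rightarrow> (nat \<Rightarrow> int)" where "cat L x y = (\<lambda>l. if l < L then x l else y (l - L))"
definition Pl where "Pl L A B = {z \<in> Vs (2*L). lo L z \<in> A \<and> vsub (hi L z) (lo L z) \<in> B}"
definition Qc where "Qc L A B = {z \<in> Vs (2*L). hi L z \<in> B \<and> vadd (lo L z) (hi L z) \<in> A}"

lemma Ppos: "P > 0" using p2 by simp
lemma ppos[simp]: "0 < p" using p2 by simp

lemma VsD: assumes "x \<in> Vs L" shows "l < L \<Longrightarrow> 0 \<le> x l" "l < L \<Longrightarrow> x l < P" "L \<le> l \<Longrightarrow> x l = 0"
  using assms unfolding Vs_def by auto

lemma Vs_mod: "x \<in> Vs L \<Longrightarrow> x l mod P = x l"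
  by (cases "l < L") (auto simp: VsD)

lemma Vs_range: "x \<in> Vs L \<Longrightarrow> 0 \<le> x l \<and> x l < P"
  using Ppos by (cases "l < L") (auto simp: VsD)

lemma VsI: "(\<And>l. 0 \<le> x l \<and> x l < P) \<Longrightarrow> (\<And>l. L \<le> l \<Longrightarrow> x l = 0) \<Longrightarrow> x \<in> Vs L"
  unfolding Vs_def by auto

lemma zv_Vs[simp]: "zv \<in> Vs L" unfolding Vs_def zv_def using Ppos by auto

lemma vadd_Vs[simp]: "x \<in> Vs L \<Longrightarrow> y \<in> Vs L \<Longrightarrow> vadd x y \<in> Vs L"
  unfolding vadd_def by (rule VsI) (auto simp: Ppos VsD)
lemma vsub_Vs[simp]: "x \<in> Vs L \<Longrightarrow> y \<in> Vs L \<Longrightarrow> vsub x y \<in> Vs L"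
  unfolding vsub_def by (rule VsI) (auto simp: Ppos VsD)
lemma vneg_Vs[simp]: "x \<in> Vs L \<Longrightarrow> vneg x \<in> Vs L"
  unfolding vneg_def by (rule VsI) (auto simp: Ppos VsD pos_mod_sign pos_mod_bound)

lemma vadd_zv[simp]: "x \<in> Vs L \<Longrightarrow> vadd x zv = x"
  unfolding vadd_def zv_def by (auto simp: Vs_mod)
lemma zv_vadd[simp]: "x \<in> Vs L \<Longrightarrow> vadd zv x = x"
  unfolding vadd_def zv_def by (auto simp: Vs_mod)
lemma vsub_zv[simp]: "x \<in> Vs L \<Longrightarrow> vsub x zv = x"
  unfolding vsub_def zv_def by (auto simp: Vs_mod)
lemma vneg_zv[simp]: "vneg zv = zv"
  unfolding vneg_def zv_def by auto
lemma vsub_self[simp]: "vsub x x = zv"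
  unfolding vsub_def zv_def by auto

lemma vadd_comm: "vadd x y = vadd y x" unfolding vadd_def by (auto simp: add.commute)
lemma vadd_assoc: "vadd (vadd x y) z = vadd x (vadd y z)"
  unfolding vadd_def by (auto simp: mod_simps add.assoc)
lemma vsub_eq: "vsub x y = vadd x (vneg y)"
  unfolding vsub_def vadd_def vneg_def by (auto simp: mod_simps)

lemma vsub_eq_zv: "x \<in> Vs L \<Longrightarrow> y \<in> Vs L \<Longrightarrow> vsub x y = zv \<Longrightarrow> x = y"
proof
  fix l assume x: "x \<in> Vs L" and y: "y \<in> Vs L" and e: "vsub x y = zv"
  have "(x l - y l) mod P = 0" using e unfolding vsub_def zv_def by meson
  hence "x l mod P = y l mod P" by (simp add: mod_eq_dvd_iff dvd_eq_mod_eq_0)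
  thus "x l = y l" using Vs_mod[OF x] Vs_mod[OF y] by simp
qed

lemma vadd_vsub: "y \<in> Vs L \<Longrightarrow> vadd x (vsub y x) = y"
  unfolding vadd_def vsub_def by (auto simp: mod_simps Vs_mod)
lemma vsub_vadd: "z \<in> Vs L \<Longrightarrow> vsub (vadd z a) a = z"
  unfolding vadd_def vsub_def by (auto simp: mod_simps Vs_mod)
lemma vadd_vneg: "vadd x (vneg x) = zv"
  unfolding vadd_def vneg_def zv_def by (auto simp: mod_simps)
lemma vneg_vneg: "x \<in> Vs L \<Longrightarrow> vneg (vneg x) = x"
  unfolding vneg_def by (auto simp: mod_simps Vs_mod)

lemma vadd_eq_zv: "x \<in> Vs L \<Longrightarrow> y \<in> Vs L \<Longrightarrow> vadd x y = zv \<Longrightarrow> x = vneg y"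
proof
  fix l assume x: "x \<in> Vs L" and y: "y \<in> Vs L" and e: "vadd x y = zv"
  have "(x l + y l) mod P = 0" using e unfolding vadd_def zv_def by meson
  hence "(x l - (- y l)) mod P = 0" by simp
  hence "x l mod P = (- y l) mod P" by (simp add: mod_eq_dvd_iff dvd_eq_mod_eq_0)
  thus "x l = vneg y l" using Vs_mod[OF x] unfolding vneg_def by simp
qed

end

context pv begin

lemma sum_mod_cong: "(\<And>l. l \<in> A \<Longrightarrow> f l mod P = g l mod P) \<Longrightarrow> sum f A mod P = sum g A mod P"
  by (metis (mono_tags, lifting) mod_sum_eq sum.cong)

lemma dot_comm: "dot L x y = dot L y x" unfolding dot_def by (simp add: mult.commute)

lemma dot_vadd_r: "dot L x (vadd y z) mod P = (dot L x y + dot L x z) mod P"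
proof -
  have "dot L x (vadd y z) mod P = (\<Sum>l<L. x l * (y l + z l)) mod P"
    unfolding dot_def vadd_def by (rule sum_mod_cong) (simp add: mod_simps)
  thus ?thesis by (simp add: dot_def distrib_left sum.distrib)
qed
lemma dot_vadd_l: "dot L (vadd y z) x mod P = (dot L y x + dot L z x) mod P"
  using dot_vadd_r by (simp add: dot_comm)
lemma dot_vneg_r: "dot L x (vneg y) mod P = (- dot L x y) mod P"
proof -
  have "dot L x (vneg y) mod P = (\<Sum>l<L. - (x l * y l)) mod P"
    unfolding dot_def vneg_def by (rule sum_mod_cong) (simp add: mod_simps)
  thus ?thesis by (simp add: dot_def sum_negf)
qed
lemma dot_vneg_l: "dot L (vneg y) x mod P = (- dot L y x) mod P"
  using dot_vneg_r by (simp add: dot_comm)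
lemma dot_vsub_r: "dot L x (vsub y z) mod P = (dot L x y - dot L x z) mod P"
proof -
  have "dot L x (vsub y z) mod P = (\<Sum>l<L. x l * y l - x l * z l) mod P"
    unfolding dot_def vsub_def by (rule sum_mod_cong) (simp add: mod_simps right_diff_distrib)
  thus ?thesis by (simp add: dot_def sum_subtractf)
qed
lemma dot_vsub_l: "dot L (vsub y z) x mod P = (dot L y x - dot L z x) mod P"
  using dot_vsub_r by (simp add: dot_comm)
lemma dot_zv_r[simp]: "dot L x zv = 0" unfolding dot_def zv_def by simp
lemma dot_zv_l[simp]: "dot L zv x = 0" unfolding dot_def zv_def by simp

lemma sum_split2: "(\<Sum>l<2*L. f l) = (\<Sum>l<L. f l) + (\<Sum>l<L. f (l + L)) " for f :: "nat \<Rightarrow> int"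
proof -
  have "{..<2*L} = {..<L} \<union> {L..<L+L}" by auto
  hence "(\<Sum>l<2*L. f l) = (\<Sum>l<L. f l) + (\<Sum>l\<in>{L..<L+L}. f l)"
    by (simp add: sum.union_disjoint ivl_disj_int)
  also have "(\<Sum>l\<in>{L..<L+L}. f l) = (\<Sum>l<L. f (l + L))"
    using sum.shift_bounds_nat_ivl[of f 0 L L] by (simp add: atLeast0LessThan)
  finally show ?thesis .
qed

lemma dot_split: "dot (2*L) x y = dot L (lo L x) (lo L y) + dot L (hi L x) (hi L y)"
  unfolding dot_def lo_def hi_def by (simp add: sum_split2)

lemma wt_split: "wt (2*L) z = wt L (lo L z) + wt L (hi L z)"
proof -
  have e: "{l. l < 2*L \<and> z l \<noteq> 0} = {l. l < L \<and> lo L z l \<noteq> 0} \<union> (\<lambda>l. l + L) ` {l. l < L \<and> hi L z l \<noteq> 0}"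
    (is "?A = ?B \<union> ?C")
  proof
    show "?A \<subseteq> ?B \<union> ?C"
    proof
      fix l assume l: "l \<in> ?A"
      show "l \<in> ?B \<union> ?C"
      proof (cases "l < L")
        case True thus ?thesis using l by (simp add: lo_def)
      next
        case False
        hence "l = (l - L) + L" by simp
        moreover have "l - L \<in> {l. l < L \<and> hi L z l \<noteq> 0}" using l False by (auto simp: hi_def)
        ultimately show ?thesis by blast
      qed
    qed
    show "?B \<union> ?C \<subseteq> ?A" by (auto simp: lo_def hi_def split: if_splits)
  qed
  have "card ({l. l < L \<and> lo L z l \<noteq> 0} \<union> (\<lambda>l. l + L) ` {l. l < L \<and> hi L z l \<noteq> 0})
       = card {l. l < L \<and> lo L z l \<noteq> 0} + card ((\<lambda>l. l + L) ` {l. l < L \<and> hi L z l \<noteq> 0})"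
    by (rule card_Un_disjoint) auto
  also have "card ((\<lambda>l. l + L) ` {l. l < L \<and> hi L z l \<noteq> 0}) = card {l. l < L \<and> hi L z l \<noteq> 0}"
    by (rule card_image) (auto simp: inj_on_def)
  finally show ?thesis unfolding wt_def e .
qed

lemma wt_vadd: "wt L (vadd x y) \<le> wt L x + wt L y"
proof -
  have "{l. l < L \<and> vadd x y l \<noteq> 0} \<subseteq> {l. l < L \<and> x l \<noteq> 0} \<union> {l. l < L \<and> y l \<noteq> 0}"
    unfolding vadd_def by auto
  hence "wt L (vadd x y) \<le> card ({l. l < L \<and> x l \<noteq> 0} \<union> {l. l < L \<and> y l \<noteq> 0})"
    unfolding wt_def by (intro card_mono) auto
  also have "\<dots> \<le> wt L x + wt L y" unfolding wt_def by (rule card_Un_le)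
  finally show ?thesis .
qed

lemma vneg_nz: "x \<in> Vs L \<Longrightarrow> vneg x l = 0 \<longleftrightarrow> x l = 0"
proof -
  assume x: "x \<in> Vs L"
  have r: "0 \<le> x l" "x l < P" using Vs_range[OF x] by auto
  show ?thesis
  proof
    assume "vneg x l = 0"
    hence "P dvd - x l" unfolding vneg_def by (simp add: dvd_eq_mod_eq_0)
    hence "P dvd x l" by simp
    thus "x l = 0" using r by (metis zdvd_not_zless antisym_conv1)
  qed (simp add: vneg_def)
qed

lemma wt_vneg: "x \<in> Vs L \<Longrightarrow> wt L (vneg x) = wt L x"
  unfolding wt_def using vneg_nz by simp

lemma wt_vsub: "y \<in> Vs L \<Longrightarrow> wt L (vsub x y) \<le> wt L x + wt L y"
  using wt_vadd[of L x "vneg y"] wt_vneg[of y L] by (simp add: vsub_eq)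

lemma wt_pos: "x \<in> Vs L \<Longrightarrow> x \<noteq> zv \<Longrightarrow> 1 \<le> wt L x"
proof -
  assume x: "x \<in> Vs L" and nz: "x \<noteq> zv"
  then obtain l where l: "x l \<noteq> 0" unfolding zv_def by auto
  hence "l < L" using VsD(3)[OF x] by (meson not_le)
  hence "l \<in> {l. l < L \<and> x l \<noteq> 0}" using l by auto
  moreover have "finite {l. l < L \<and> x l \<noteq> 0}" by auto
  ultimately show ?thesis unfolding wt_def
    by (metis One_nat_def Suc_leI card_gt_0_iff empty_iff)
qed

lemma wt_le: "wt L x \<le> L"
proof -
  have "wt L x \<le> card {..<L}" unfolding wt_def by (intro card_mono) auto
  thus ?thesis by simp
qed

lemma lo_Vs[simp]: "z \<in> Vs (2*L) \<Longrightarrow> lo L z \<in> Vs L"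
  unfolding lo_def by (rule VsI) (auto simp: Vs_range Ppos)
lemma hi_Vs[simp]: "z \<in> Vs (2*L) \<Longrightarrow> hi L z \<in> Vs L"
  unfolding hi_def by (rule VsI) (auto simp: Vs_range VsD)
lemma cat_Vs[simp]: "x \<in> Vs L \<Longrightarrow> y \<in> Vs L \<Longrightarrow> cat L x y \<in> Vs (2*L)"
  unfolding cat_def by (rule VsI) (auto simp: Vs_range VsD)
lemma lo_cat[simp]: "x \<in> Vs L \<Longrightarrow> lo L (cat L x y) = x"
  unfolding lo_def cat_def by (auto simp: VsD)
lemma hi_cat[simp]: "hi L (cat L x y) = y"
  unfolding hi_def cat_def by (simp add: fun_eq_iff)
lemma cat_lo_hi[simp]: "z \<in> Vs (2*L) \<Longrightarrow> cat L (lo L z) (hi L z) = z"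
  unfolding lo_def hi_def cat_def by auto
lemma lo_vadd: "lo L (vadd z w) = vadd (lo L z) (lo L w)"
  unfolding lo_def vadd_def by auto
lemma hi_vadd: "hi L (vadd z w) = vadd (hi L z) (hi L w)"
  unfolding hi_def vadd_def by auto
lemma lo_vneg: "lo L (vneg z) = vneg (lo L z)"
  unfolding lo_def vneg_def by auto
lemma hi_vneg: "hi L (vneg z) = vneg (hi L z)"
  unfolding hi_def vneg_def by auto
lemma lo_zv[simp]: "lo L zv = zv" unfolding lo_def zv_def by auto
lemma hi_zv[simp]: "hi L zv = zv" unfolding hi_def zv_def by auto
lemma vsub_vadd_vadd: "vsub (vadd a b) (vadd c d) = vadd (vsub a c) (vsub b d)"
  unfolding vsub_def vadd_def by (rule ext, simp only: mod_diff_eq mod_add_eq, simp add: algebra_simps)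
lemma vsub_vneg_vneg: "vsub (vneg a) (vneg c) = vneg (vsub a c)"
  unfolding vsub_def vneg_def by (rule ext, simp only: mod_diff_eq mod_minus_eq, simp add: algebra_simps)
lemma zv_lo_hi: "z \<in> Vs (2*L) \<Longrightarrow> lo L z = zv \<and> hi L z = zv \<Longrightarrow> z = zv"
proof -
  assume z: "z \<in> Vs (2*L)" and h: "lo L z = zv \<and> hi L z = zv"
  have "z = cat L zv zv" using cat_lo_hi[OF z] h by simp
  thus "z = zv" by (simp add: cat_def zv_def fun_eq_iff)
qed

end

context pv begin

lemma grpD: assumes "grp L A"
  shows "A \<subseteq> Vs L" "zv \<in> A" "x \<in> A \<Longrightarrow> y \<in> A \<Longrightarrow> vadd x y \<in> A" "x \<in> A \<Longrightarrow> vneg x \<in> A"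
  using assms unfolding grp_def by auto

lemma grp_vsub: "grp L A \<Longrightarrow> x \<in> A \<Longrightarrow> y \<in> A \<Longrightarrow> vsub x y \<in> A"
  by (simp add: vsub_eq grpD)

lemma grp_Vs: "grp L (Vs L)" unfolding grp_def by auto
lemma grp_zv: "grp L {zv}" unfolding grp_def using vadd_zv[OF zv_Vs] by auto

lemma comp_memI: "x \<in> Vs L \<Longrightarrow> (\<And>y. y \<in> A \<Longrightarrow> dot L x y mod P = 0) \<Longrightarrow> x \<in> comp L A"
  unfolding comp_def by auto
lemma comp_memD: "x \<in> comp L A \<Longrightarrow> y \<in> A \<Longrightarrow> dot L x y mod P = 0"
  unfolding comp_def by auto
lemma comp_memV: "x \<in> comp L A \<Longrightarrow> x \<in> Vs L"
  unfolding comp_def by auto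

lemma mcl: "(a::int) mod P = a' mod P \<Longrightarrow> (a + b) mod P = (a' + b) mod P"
  using mod_add_left_eq[of a P b] mod_add_left_eq[of a' P b] by simp
lemma mcr: "(b::int) mod P = b' mod P \<Longrightarrow> (a + b) mod P = (a + b') mod P"
  using mod_add_right_eq[of a b P] mod_add_right_eq[of a b' P] by simp
lemma modadd0: "(a::int) mod P = 0 \<Longrightarrow> b mod P = 0 \<Longrightarrow> (a + b) mod P = 0"
  using mod_add_eq[of a P b] by simp

lemma comp_grp: "grp L (comp L A)"
  unfolding grp_def
proof (intro conjI ballI)
  show "comp L A \<subseteq> Vs L" using comp_memV by auto
  show "zv \<in> comp L A" by (rule comp_memI) auto
  fix x y assume x: "x \<in> comp L A" and y: "y \<in> comp L A"
  show "vadd x y \<in> comp L A"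
  proof (rule comp_memI)
    show "vadd x y \<in> Vs L" using x y comp_memV by auto
    fix z assume "z \<in> A"
    hence "dot L x z mod P = 0" "dot L y z mod P = 0" using x y comp_memD by auto
    thus "dot L (vadd x y) z mod P = 0" unfolding dot_vadd_l by (rule modadd0)
  qed
  show "vneg x \<in> comp L A"
  proof (rule comp_memI)
    show "vneg x \<in> Vs L" using x comp_memV by auto
    fix z assume "z \<in> A"
    hence "dot L x z mod P = 0" using x comp_memD by auto
    thus "dot L (vneg x) z mod P = 0" unfolding dot_vneg_l using mod_minus_eq[of "dot L x z" P] by simp
  qed
qed

lemma comp_sub: "comp L A \<subseteq> Vs L" unfolding comp_def by auto
lemma comp_anti: "A \<subseteq> B \<Longrightarrow> comp L B \<subseteq> comp L A" unfolding comp_def by auto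

lemma grp_Pl: assumes A: "grp L A" and B: "grp L B" shows "grp (2*L) (Pl L A B)"
  unfolding grp_def Pl_def
proof (intro conjI ballI)
  show "zv \<in> {z \<in> Vs (2 * L). lo L z \<in> A \<and> vsub (hi L z) (lo L z) \<in> B}"
    using grpD[OF A] grpD[OF B] by simp
  fix x y assume x: "x \<in> {z \<in> Vs (2 * L). lo L z \<in> A \<and> vsub (hi L z) (lo L z) \<in> B}"
    and y: "y \<in> {z \<in> Vs (2 * L). lo L z \<in> A \<and> vsub (hi L z) (lo L z) \<in> B}"
  show "vadd x y \<in> {z \<in> Vs (2 * L). lo L z \<in> A \<and> vsub (hi L z) (lo L z) \<in> B}"
    using x y by (simp add: lo_vadd hi_vadd vsub_vadd_vadd grpD[OF A] grpD[OF B])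
  show "vneg x \<in> {z \<in> Vs (2 * L). lo L z \<in> A \<and> vsub (hi L z) (lo L z) \<in> B}"
    using x by (simp add: lo_vneg hi_vneg vsub_vneg_vneg grpD[OF A] grpD[OF B])
qed auto

lemma Pl_sub: "Pl L A B \<subseteq> Vs (2*L)" unfolding Pl_def by auto
lemma Pl_mono: "A \<subseteq> A' \<Longrightarrow> B \<subseteq> B' \<Longrightarrow> Pl L A B \<subseteq> Pl L A' B'" unfolding Pl_def by auto

lemma comp_Pl: assumes A: "grp L A" and B: "grp L B"
  shows "comp (2*L) (Pl L A B) = Qc L (comp L A) (comp L B)"
proof
  show "comp (2*L) (Pl L A B) \<subseteq> Qc L (comp L A) (comp L B)"
  proof
    fix x assume x: "x \<in> comp (2*L) (Pl L A B)"
    have xV: "x \<in> Vs (2*L)" using x comp_def by auto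
    have "hi L x \<in> comp L B" unfolding comp_def
    proof (simp add: xV, intro ballI)
      fix v assume v: "v \<in> B"
      have vV: "v \<in> Vs L" using v grpD[OF B] by auto
      have "cat L zv v \<in> Pl L A B" unfolding Pl_def using v vV grpD[OF A] by simp
      hence "dot (2*L) x (cat L zv v) mod P = 0" using x unfolding comp_def by auto
      thus "dot L (hi L x) v mod P = 0" unfolding dot_split using vV by simp
    qed
    moreover have "vadd (lo L x) (hi L x) \<in> comp L A" unfolding comp_def
    proof (simp add: xV, intro ballI)
      fix u assume u: "u \<in> A"
      have uV: "u \<in> Vs L" using u grpD[OF A] by auto
      have "cat L u u \<in> Pl L A B" unfolding Pl_def using u uV grpD[OF B] by simp
      hence "dot (2*L) x (cat L u u) mod P = 0" using x unfolding comp_def by auto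
      thus "dot L (vadd (lo L x) (hi L x)) u mod P = 0" unfolding dot_split dot_vadd_l using uV by simp
    qed
    ultimately show "x \<in> Qc L (comp L A) (comp L B)" unfolding Qc_def using xV by simp
  qed
  show "Qc L (comp L A) (comp L B) \<subseteq> comp (2*L) (Pl L A B)"
  proof
    fix x assume x: "x \<in> Qc L (comp L A) (comp L B)"
    have xV: "x \<in> Vs (2*L)" and h: "hi L x \<in> comp L B" and s: "vadd (lo L x) (hi L x) \<in> comp L A"
      using x unfolding Qc_def by auto
    show "x \<in> comp (2*L) (Pl L A B)" unfolding comp_def
    proof (simp add: xV, intro ballI)
      fix z assume z: "z \<in> Pl L A B"
      define u where "u = lo L z"
      define v where "v = vsub (hi L z) (lo L z)"
      have zV: "z \<in> Vs (2*L)" and u: "u \<in> A" and v: "v \<in> B" using z unfolding Pl_def u_def v_def by auto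
      have hz: "hi L z = vadd u v" unfolding u_def v_def using vadd_vsub[OF hi_Vs[OF zV]] by simp
      have e1: "dot L (vadd (lo L x) (hi L x)) u mod P = 0" using s u unfolding comp_def by auto
      have e2: "dot L (hi L x) v mod P = 0" using h v unfolding comp_def by auto
      have "dot (2*L) x z mod P = (dot L (lo L x) u + dot L (hi L x) (vadd u v)) mod P"
        unfolding dot_split u_def hz ..
      also have "\<dots> = (dot L (lo L x) u + (dot L (hi L x) u + dot L (hi L x) v)) mod P"
        by (rule mcr[OF dot_vadd_r])
      also have "\<dots> = ((dot L (lo L x) u + dot L (hi L x) u) + dot L (hi L x) v) mod P"
        by (simp add: add.assoc)
      also have "\<dots> = (dot L (vadd (lo L x) (hi L x)) u + dot L (hi L x) v) mod P"
        by (rule mcl[OF dot_vadd_l, symmetric])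
      also have "\<dots> = 0" using e1 e2 by (rule modadd0)
      finally show "dot (2*L) x z mod P = 0" .
    qed
  qed
qed

lemma comp_Qc: assumes A: "zv \<in> A" "A \<subseteq> Vs L" and B: "zv \<in> B" "B \<subseteq> Vs L"
  shows "comp (2*L) (Qc L A B) = Pl L (comp L A) (comp L B)"
proof
  show "comp (2*L) (Qc L A B) \<subseteq> Pl L (comp L A) (comp L B)"
  proof
    fix x assume x: "x \<in> comp (2*L) (Qc L A B)"
    have xV: "x \<in> Vs (2*L)" using x comp_def by auto
    have "lo L x \<in> comp L A" unfolding comp_def
    proof (simp add: xV, intro ballI)
      fix s assume s: "s \<in> A"
      have sV: "s \<in> Vs L" using s A by auto
      have "cat L s zv \<in> Qc L A B" unfolding Qc_def using s sV B by simp
      hence "dot (2*L) x (cat L s zv) mod P = 0" using x unfolding comp_def by auto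
      thus "dot L (lo L x) s mod P = 0" unfolding dot_split using sV by simp
    qed
    moreover have "vsub (hi L x) (lo L x) \<in> comp L B" unfolding comp_def
    proof (simp add: xV, intro ballI)
      fix v assume v: "v \<in> B"
      have vV: "v \<in> Vs L" using v B by auto
      have "cat L (vneg v) v \<in> Qc L A B" unfolding Qc_def using v vV A
        by (simp add: vadd_comm vadd_vneg)
      hence "dot (2*L) x (cat L (vneg v) v) mod P = 0" using x unfolding comp_def by auto
      hence "(dot L (lo L x) (vneg v) + dot L (hi L x) v) mod P = 0" unfolding dot_split using vV by simp
      hence "(- dot L (lo L x) v + dot L (hi L x) v) mod P = 0"
        using mcl[OF dot_vneg_r] by simp
      thus "dot L (vsub (hi L x) (lo L x)) v mod P = 0" unfolding dot_vsub_l by simp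
    qed
    ultimately show "x \<in> Pl L (comp L A) (comp L B)" unfolding Pl_def using xV by simp
  qed
  show "Pl L (comp L A) (comp L B) \<subseteq> comp (2*L) (Qc L A B)"
  proof
    fix x assume x: "x \<in> Pl L (comp L A) (comp L B)"
    have xV: "x \<in> Vs (2*L)" and l: "lo L x \<in> comp L A" and d: "vsub (hi L x) (lo L x) \<in> comp L B"
      using x unfolding Pl_def by auto
    show "x \<in> comp (2*L) (Qc L A B)" unfolding comp_def
    proof (simp add: xV, intro ballI)
      fix z assume z: "z \<in> Qc L A B"
      define s where "s = vadd (lo L z) (hi L z)"
      define v where "v = hi L z"
      have zV: "z \<in> Vs (2*L)" and s: "s \<in> A" and v: "v \<in> B" using z unfolding Qc_def s_def v_def by auto
      have lz: "lo L z = vsub s v" unfolding s_def v_def using vsub_vadd[OF lo_Vs[OF zV]] by simp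
      have e1: "dot L (lo L x) s mod P = 0" using l s unfolding comp_def by auto
      have e2: "dot L (vsub (hi L x) (lo L x)) v mod P = 0" using d v unfolding comp_def by auto
      have "dot (2*L) x z mod P = (dot L (lo L x) (vsub s v) + dot L (hi L x) v) mod P"
        unfolding dot_split lz v_def ..
      also have "\<dots> = ((dot L (lo L x) s - dot L (lo L x) v) + dot L (hi L x) v) mod P"
        by (rule mcl[OF dot_vsub_r])
      also have "\<dots> = (dot L (lo L x) s + (dot L (hi L x) v - dot L (lo L x) v)) mod P"
        by (simp add: algebra_simps)
      also have "\<dots> = (dot L (lo L x) s + dot L (vsub (hi L x) (lo L x)) v) mod P"
        by (rule mcr[OF dot_vsub_l, symmetric])
      also have "\<dots> = 0" using e1 e2 by (rule modadd0)
      finally show "dot (2*L) x z mod P = 0" .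
    qed
  qed
qed

lemma comp_Vs: "comp L (Vs L) = {zv}"
proof
  show "comp L (Vs L) \<subseteq> {zv}"
  proof
    fix x assume x: "x \<in> comp L (Vs L)"
    have xV: "x \<in> Vs L" using x comp_def by auto
    have "x = zv"
    proof
      fix l show "x l = zv l"
      proof (cases "l < L")
        case True
        define e where "e = (\<lambda>k. if k = l then (1::int) else 0)"
        have eV: "e \<in> Vs L" unfolding e_def by (rule VsI) (use True p2 in auto)
        have "dot L x e = (\<Sum>k<L. if k = l then x k else 0)" unfolding dot_def e_def
          by (rule sum.cong) auto
        also have "\<dots> = x l" using True by simp
        finally have "dot L x e = x l" .
        hence "x l mod P = 0" using x eV unfolding comp_def by auto
        thus ?thesis using Vs_mod[OF xV] by (simp add: zv_def)
      qed (simp add: VsD[OF xV] zv_def)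
    qed
    thus "x \<in> {zv}" by simp
  qed
  show "{zv} \<subseteq> comp L (Vs L)" unfolding comp_def by simp
qed

lemma comp_zv: "comp L {zv} = Vs L" unfolding comp_def by simp

lemma card_Pl: assumes A: "A \<subseteq> Vs L" and B: "B \<subseteq> Vs L"
  shows "card (Pl L A B) = card A * card B"
proof -
  have "bij_betw (\<lambda>(u,v). cat L u (vadd u v)) (A \<times> B) (Pl L A B)"
  proof (rule bij_betw_imageI)
    show "inj_on (\<lambda>(u,v). cat L u (vadd u v)) (A \<times> B)"
    proof (rule inj_onI, clarify)
      fix u v u' v' assume u: "u \<in> A" and v: "v \<in> B" and u': "u' \<in> A" and v': "v' \<in> B"
        and e: "cat L u (vadd u v) = cat L u' (vadd u' v')"
      have uV: "u \<in> Vs L" "u' \<in> Vs L" using u u' A by auto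
      have uu: "u = u'" using arg_cong[OF e, of "lo L"] uV by simp
      have "vadd u v = vadd u' v'" using arg_cong[OF e, of "hi L"] by simp
      hence "vsub (vadd v u) u = vsub (vadd v' u) u" using uu by (simp add: vadd_comm)
      moreover have vV: "v \<in> Vs L" "v' \<in> Vs L" using v v' B by auto
      ultimately have "v = v'" using vsub_vadd[OF vV(1), of u] vsub_vadd[OF vV(2), of u] by simp
      thus "u = u' \<and> v = v'" using uu by simp
    qed
    show "(\<lambda>(u,v). cat L u (vadd u v)) ` (A \<times> B) = Pl L A B"
    proof
      show "(\<lambda>(u,v). cat L u (vadd u v)) ` (A \<times> B) \<subseteq> Pl L A B"
      proof clarify
        fix u v assume u: "u \<in> A" and v: "v \<in> B"
        have uV: "u \<in> Vs L" and vV: "v \<in> Vs L" using u v A B by auto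
        have "vsub (vadd u v) u = v" using vsub_vadd[OF vV, of u] by (simp add: vadd_comm)
        thus "cat L u (vadd u v) \<in> Pl L A B" unfolding Pl_def using u v uV vV by simp
      qed
      show "Pl L A B \<subseteq> (\<lambda>(u,v). cat L u (vadd u v)) ` (A \<times> B)"
      proof
        fix z assume z: "z \<in> Pl L A B"
        have zV: "z \<in> Vs (2*L)" using z Pl_def by auto
        have "z = cat L (lo L z) (vadd (lo L z) (vsub (hi L z) (lo L z)))"
          using vadd_vsub[OF hi_Vs[OF zV]] cat_lo_hi[OF zV] by simp
        thus "z \<in> (\<lambda>(u,v). cat L u (vadd u v)) ` (A \<times> B)" using z unfolding Pl_def by force
      qed
    qed
  qed
  hence "card (A \<times> B) = card (Pl L A B)" by (rule bij_betw_same_card)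
  thus ?thesis by (simp add: card_cartesian_product)
qed

lemma card_Qc: assumes A: "A \<subseteq> Vs L" and B: "B \<subseteq> Vs L"
  shows "card (Qc L A B) = card A * card B"
proof -
  have "bij_betw (\<lambda>(s,v). cat L (vsub s v) v) (A \<times> B) (Qc L A B)"
  proof (rule bij_betw_imageI)
    show "inj_on (\<lambda>(s,v). cat L (vsub s v) v) (A \<times> B)"
    proof (rule inj_onI, clarify)
      fix s v s' v' assume s: "s \<in> A" and v: "v \<in> B" and s': "s' \<in> A" and v': "v' \<in> B"
        and e: "cat L (vsub s v) v = cat L (vsub s' v') v'"
      have vv: "v = v'" using arg_cong[OF e, of "hi L"] by simp
      have "vsub s v = vsub s' v'" using arg_cong[OF e, of "lo L"] s s' v v' A B
        by (simp add: subset_iff)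
      hence "vadd (vsub s v) v = vadd (vsub s' v) v" using vv by simp
      moreover have sV: "s \<in> Vs L" "s' \<in> Vs L" using s s' A by auto
      ultimately have "s = s'" using vadd_vsub[OF sV(1), of v] vadd_vsub[OF sV(2), of v] by (simp add: vadd_comm)
      thus "s = s' \<and> v = v'" using vv by simp
    qed
    show "(\<lambda>(s,v). cat L (vsub s v) v) ` (A \<times> B) = Qc L A B"
    proof
      show "(\<lambda>(s,v). cat L (vsub s v) v) ` (A \<times> B) \<subseteq> Qc L A B"
      proof clarify
        fix s v assume s: "s \<in> A" and v: "v \<in> B"
        have sV: "s \<in> Vs L" and vV: "v \<in> Vs L" using s v A B by auto
        have "vadd (vsub s v) v = s" using vadd_vsub[OF sV, of v] by (simp add: vadd_comm)
        thus "cat L (vsub s v) v \<in> Qc L A B" unfolding Qc_def using s v sV vV by simp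
      qed
      show "Qc L A B \<subseteq> (\<lambda>(s,v). cat L (vsub s v) v) ` (A \<times> B)"
      proof
        fix z assume z: "z \<in> Qc L A B"
        have zV: "z \<in> Vs (2*L)" using z Qc_def by auto
        have "z = cat L (vsub (vadd (lo L z) (hi L z)) (hi L z)) (hi L z)"
          using vsub_vadd[OF lo_Vs[OF zV]] cat_lo_hi[OF zV] by simp
        thus "z \<in> (\<lambda>(s,v). cat L (vsub s v) v) ` (A \<times> B)" using z unfolding Qc_def by force
      qed
    qed
  qed
  hence "card (A \<times> B) = card (Qc L A B)" by (rule bij_betw_same_card)
  thus ?thesis by (simp add: card_cartesian_product)
qed

end

fun cc :: "nat \<Rightarrow> nat \<Rightarrow> nat" where
  "cc s 0 = (if s = 0 then 1 else 0)"
| "cc s (Suc m) = cc s m + cc (s - 1) m"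

lemma cc0: "cc 0 m = 2 ^ m"
  by (induction m) auto

context pv begin

lemma card_Vs: "card (Vs L) = p ^ L \<and> finite (Vs L)"
proof (induction L)
  case 0
  have "Vs 0 = {zv}" unfolding Vs_def zv_def by auto
  thus ?case by simp
next
  case (Suc L)
  have b: "bij_betw (\<lambda>(y,c). y(L := c)) (Vs L \<times> {0..<P}) (Vs (Suc L))"
  proof (rule bij_betw_imageI)
    show "inj_on (\<lambda>(y,c). y(L := c)) (Vs L \<times> {0..<P})"
    proof (rule inj_onI, clarify)
      fix y c y' c' assume y: "y \<in> Vs L" and y': "y' \<in> Vs L" and e: "y(L := c) = y'(L := c')"
      have "c = c'" using fun_cong[OF e, of L] by simp
      moreover have "y = y'"
      proof
        fix l show "y l = y' l"
          using fun_cong[OF e, of l] VsD(3)[OF y, of L] VsD(3)[OF y', of L] by (cases "l = L") auto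
      qed
      ultimately show "y = y' \<and> c = c'" by simp
    qed
    show "(\<lambda>(y,c). y(L := c)) ` (Vs L \<times> {0..<P}) = Vs (Suc L)"
    proof
      show "(\<lambda>(y,c). y(L := c)) ` (Vs L \<times> {0..<P}) \<subseteq> Vs (Suc L)"
        by (auto simp: Vs_def)
      show "Vs (Suc L) \<subseteq> (\<lambda>(y,c). y(L := c)) ` (Vs L \<times> {0..<P})"
      proof
        fix x assume x: "x \<in> Vs (Suc L)"
        have "x = (\<lambda>(y,c). y(L := c)) (x(L := 0), x L)" by simp
        moreover have "(x(L := 0), x L) \<in> Vs L \<times> {0..<P}" using x unfolding Vs_def by auto
        ultimately show "x \<in> (\<lambda>(y,c). y(L := c)) ` (Vs L \<times> {0..<P})" by blast
      qed
    qed
  qed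
  have "card (Vs L \<times> {0..<P}) = p ^ L * p" using Suc.IH by (simp add: card_cartesian_product)
  moreover have "finite (Vs L \<times> {0..<P})" using Suc.IH by simp
  ultimately show ?case using bij_betw_same_card[OF b] bij_betw_finite[OF b] by (simp add: mult.commute)
qed

lemma finite_Vs[simp]: "finite (Vs L)" using card_Vs by simp

fun R :: "nat \<Rightarrow> nat \<Rightarrow> nat \<Rightarrow> (nat \<Rightarrow> int) set" where
  "R t s 0 = (if s = 0 then {zv} else Vs t)"
| "R t s (Suc m) = Pl (t * 2 ^ m) (R t s m) (R t (s - 1) m)"

lemma lenS: "(t::nat) * 2 ^ Suc m = 2 * (t * 2 ^ m)" by simp

lemma R_grp: "grp (t * 2 ^ m) (R t s m)"
proof (induction m arbitrary: s)
  case 0 thus ?case by (simp add: grp_Vs grp_zv)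
next
  case (Suc m) thus ?case unfolding lenS by (simp add: grp_Pl)
qed

lemma R_sub: "R t s m \<subseteq> Vs (t * 2 ^ m)" using R_grp grpD by blast

lemma R0: "R t 0 m = {zv}"
proof (induction m)
  case 0 thus ?case by simp
next
  case (Suc m)
  show ?case
  proof
    show "R t 0 (Suc m) \<subseteq> {zv}"
    proof
      fix z assume "z \<in> R t 0 (Suc m)"
      hence "z \<in> Pl (t * 2 ^ m) {zv} {zv}" using Suc.IH by simp
      hence zz: "z \<in> Vs (2 * (t * 2 ^ m)) \<and> lo (t * 2 ^ m) z = zv \<and> vsub (hi (t * 2 ^ m) z) (lo (t * 2 ^ m) z) = zv"
        unfolding Pl_def mem_Collect_eq singleton_iff by assumption
      hence z: "z \<in> Vs (2 * (t * 2 ^ m))" "lo (t * 2 ^ m) z = zv" "vsub (hi (t * 2 ^ m) z) (lo (t * 2 ^ m) z) = zv"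
        by blast+
      have "hi (t * 2 ^ m) z = zv" using vsub_eq_zv[OF hi_Vs[OF z(1)] lo_Vs[OF z(1)] z(3)] z(2) by simp
      thus "z \<in> {zv}" using zv_lo_hi[OF z(1)] z(2) by simp
    qed
    show "{zv} \<subseteq> R t 0 (Suc m)" using R_grp[of t "Suc m" 0] grpD by auto
  qed
qed

lemma Rfull: "m + 1 \<le> s \<Longrightarrow> R t s m = Vs (t * 2 ^ m)"
proof (induction m arbitrary: s)
  case 0 thus ?case by simp
next
  case (Suc m)
  have "R t s m = Vs (t * 2 ^ m)" "R t (s - 1) m = Vs (t * 2 ^ m)" using Suc by auto
  hence e: "R t s (Suc m) = Pl (t * 2 ^ m) (Vs (t * 2 ^ m)) (Vs (t * 2 ^ m))" by simp
  have "Pl (t * 2 ^ m) (Vs (t * 2 ^ m)) (Vs (t * 2 ^ m)) = Vs (2 * (t * 2 ^ m))"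
  proof
    show "Pl (t * 2 ^ m) (Vs (t * 2 ^ m)) (Vs (t * 2 ^ m)) \<subseteq> Vs (2 * (t * 2 ^ m))" by (rule Pl_sub)
    show "Vs (2 * (t * 2 ^ m)) \<subseteq> Pl (t * 2 ^ m) (Vs (t * 2 ^ m)) (Vs (t * 2 ^ m))"
      unfolding Pl_def by (intro subsetI CollectI conjI) (simp_all add: lo_Vs hi_Vs vsub_Vs)
  qed
  thus ?case using e lenS by metis
qed

lemma R_mono: "s \<le> s' \<Longrightarrow> R t s m \<subseteq> R t s' m"
proof (induction m arbitrary: s s')
  case 0 thus ?case by auto
next
  case (Suc m)
  have "R t s m \<subseteq> R t s' m" "R t (s - 1) m \<subseteq> R t (s' - 1) m" using Suc by auto
  thus ?case by (simp add: Pl_mono)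
qed

lemma R_dist: "1 \<le> s \<Longrightarrow> s \<le> m + 1 \<Longrightarrow> z \<in> R t s m \<Longrightarrow> z \<noteq> zv \<Longrightarrow> 2 ^ (m + 1 - s) \<le> wt (t * 2 ^ m) z"
proof (induction m arbitrary: s z)
  case 0 thus ?case using wt_pos[of z t] by simp
next
  case (Suc m)
  define L where "L = t * 2 ^ m"
  have zP: "z \<in> Pl L (R t s m) (R t (s - 1) m)" using Suc.prems L_def by simp
  hence zV: "z \<in> Vs (2*L)" and u: "lo L z \<in> R t s m" and v: "vsub (hi L z) (lo L z) \<in> R t (s - 1) m"
    unfolding Pl_def by auto
  have lV: "lo L z \<in> Vs L" and hV: "hi L z \<in> Vs L" using zV by auto
  have wz: "wt (t * 2 ^ Suc m) z = wt L (lo L z) + wt L (hi L z)" unfolding lenS L_def[symmetric] by (rule wt_split)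
  show ?case
  proof (cases "vsub (hi L z) (lo L z) = zv")
    case True
    hence hl: "hi L z = lo L z" using vsub_eq_zv[OF hV lV] by simp
    have lnz: "lo L z \<noteq> zv" using zv_lo_hi[OF zV] hl Suc.prems(4) by auto
    show ?thesis
    proof (cases "s \<le> m + 1")
      case True
      have "2 ^ (m + 1 - s) \<le> wt L (lo L z)" using Suc.IH[OF Suc.prems(1) True u lnz] L_def by simp
      moreover have "(2::nat) ^ (Suc m + 1 - s) = 2 * 2 ^ (m + 1 - s)" using True
        by (simp add: Suc_diff_le)
      moreover have "wt (t * 2 ^ Suc m) z = 2 * wt L (lo L z)" using wz hl by simp
      ultimately show ?thesis by linarith
    next
      case False
      hence "Suc m + 1 - s = 0" using Suc.prems(2) by simp
      thus ?thesis using wz wt_pos[OF lV lnz] by simp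
    qed
  next
    case False
    have s1: "s \<noteq> 1"
    proof
      assume "s = 1"
      hence "R t (s - 1) m = {zv}" using R0 by simp
      thus False using v False by simp
    qed
    hence "1 \<le> s - 1" "s - 1 \<le> m + 1" using Suc.prems by auto
    hence A0: "2 ^ (m + 1 - (s - 1)) \<le> wt L (vsub (hi L z) (lo L z))" using Suc.IH[of "s - 1" "vsub (hi L z) (lo L z)"] v False L_def by simp
    have B: "wt L (vsub (hi L z) (lo L z)) \<le> wt L (hi L z) + wt L (lo L z)" by (rule wt_vsub[OF lV])
    have eq: "m + 1 - (s - 1) = Suc m + 1 - s" using s1 Suc.prems(1) by simp
    have A: "2 ^ (Suc m + 1 - s) \<le> wt L (vsub (hi L z) (lo L z))" using A0 unfolding eq .
    show ?thesis using A B wz by linarith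
  qed
qed

lemma comp_R_Suc: "comp (t * 2 ^ Suc m) (R t s (Suc m)) = Qc (t * 2 ^ m) (comp (t * 2 ^ m) (R t s m)) (comp (t * 2 ^ m) (R t (s - 1) m))"
  unfolding lenS by (simp add: comp_Pl R_grp)

lemma comp_R_dist: "s \<le> m \<Longrightarrow> z \<in> comp (t * 2 ^ m) (R t s m) \<Longrightarrow> z \<noteq> zv \<Longrightarrow> 2 ^ s \<le> wt (t * 2 ^ m) z"
proof (induction m arbitrary: s z)
  case 0 thus ?case using wt_pos[of z t] comp_memV by simp
next
  case (Suc m)
  define L where "L = t * 2 ^ m"
  have zQ: "z \<in> Qc L (comp L (R t s m)) (comp L (R t (s - 1) m))" using Suc.prems comp_R_Suc L_def by simp
  hence zV: "z \<in> Vs (2*L)" and h: "hi L z \<in> comp L (R t (s - 1) m)" and w: "vadd (lo L z) (hi L z) \<in> comp L (R t s m)"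
    unfolding Qc_def by auto
  have lV: "lo L z \<in> Vs L" and hV: "hi L z \<in> Vs L" using zV by auto
  have wz: "wt (t * 2 ^ Suc m) z = wt L (lo L z) + wt L (hi L z)" unfolding lenS L_def[symmetric] by (rule wt_split)
  show ?case
  proof (cases "vadd (lo L z) (hi L z) = zv")
    case True
    hence lh: "lo L z = vneg (hi L z)" using vadd_eq_zv[OF lV hV] by simp
    have hnz: "hi L z \<noteq> zv" using zv_lo_hi[OF zV] lh Suc.prems(3) by auto
    have wz2: "wt (t * 2 ^ Suc m) z = 2 * wt L (hi L z)" using wz lh wt_vneg[OF hV] by simp
    show ?thesis
    proof (cases "s = 0")
      case True thus ?thesis using wz2 wt_pos[OF hV hnz] by simp
    next
      case False
      hence "s - 1 \<le> m" using Suc.prems by simp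
      hence "2 ^ (s - 1) \<le> wt L (hi L z)" using Suc.IH[of "s - 1" "hi L z"] h hnz L_def by simp
      moreover have "(2::nat) ^ s = 2 * 2 ^ (s - 1)" using False by (cases s) auto
      ultimately show ?thesis using wz2 by simp
    qed
  next
    case False
    have "s \<noteq> m + 1"
    proof
      assume "s = m + 1"
      hence "R t s m = Vs L" using Rfull L_def by simp
      hence "comp L (R t s m) = {zv}" using comp_Vs by simp
      thus False using w False by simp
    qed
    hence "s \<le> m" using Suc.prems by simp
    hence "2 ^ s \<le> wt L (vadd (lo L z) (hi L z))" using Suc.IH[of s "vadd (lo L z) (hi L z)"] w False L_def by simp
    moreover have "wt L (vadd (lo L z) (hi L z)) \<le> wt L (lo L z) + wt L (hi L z)" by (rule wt_vadd)
    ultimately show ?thesis using wz by simp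
  qed
qed

lemma comp_comp_R: "comp (t * 2 ^ m) (comp (t * 2 ^ m) (R t s m)) = R t s m"
proof (induction m arbitrary: s)
  case 0 thus ?case by (simp add: comp_Vs comp_zv)
next
  case (Suc m)
  define L where "L = t * 2 ^ m"
  have g1: "zv \<in> comp L (R t s m)" "comp L (R t s m) \<subseteq> Vs L"
    and g2: "zv \<in> comp L (R t (s - 1) m)" "comp L (R t (s - 1) m) \<subseteq> Vs L"
    using comp_grp grpD by blast+
  have "comp (t * 2 ^ Suc m) (comp (t * 2 ^ Suc m) (R t s (Suc m)))
      = comp (2 * L) (Qc L (comp L (R t s m)) (comp L (R t (s - 1) m)))"
  proof -
    have e: "comp (t * 2 ^ Suc m) (R t s (Suc m)) = Qc L (comp L (R t s m)) (comp L (R t (s - 1) m))"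
      by (simp only: comp_R_Suc L_def)
    show ?thesis unfolding e by (simp only: lenS L_def)
  qed
  also have "\<dots> = Pl L (R t s m) (R t (s - 1) m)"
    unfolding comp_Qc[OF g1 g2] using Suc.IH L_def by simp
  finally show ?case using L_def by simp
qed

lemma card_comp_R: "card (comp (t * 2 ^ m) (R t s m)) = p ^ (t * cc s m)"
proof (induction m arbitrary: s)
  case 0 thus ?case by (simp add: comp_Vs comp_zv card_Vs)
next
  case (Suc m)
  have "card (comp (t * 2 ^ Suc m) (R t s (Suc m))) = card (comp (t * 2 ^ m) (R t s m)) * card (comp (t * 2 ^ m) (R t (s - 1) m))"
    unfolding comp_R_Suc by (rule card_Qc) (use comp_sub in auto)
  thus ?case using Suc.IH by (simp add: power_add distrib_left)
qed

lemma finite_comp: "finite (comp L A)" using comp_sub finite_Vs finite_subset by blast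

end



context pv begin

definition dig :: "nat \<Rightarrow> nat \<Rightarrow> (nat \<Rightarrow> int)" where
  "dig N i = (\<lambda>l. if l < N then int (qdigit p i l) else 0)"
definition idx :: "nat \<Rightarrow> (nat \<Rightarrow> int) \<Rightarrow> nat" where
  "idx N x = inv_into {..<p ^ N} (dig N) x"
definition conv :: "nat \<Rightarrow> (nat \<Rightarrow> nat) \<Rightarrow> (nat \<Rightarrow> int)" where
  "conv N a = (\<lambda>l. if l < N then int (a l) else 0)"
definition zeta :: "int \<Rightarrow> complex" where
  "zeta k = cis (2 * pi * of_int k / real p)"

lemma qdigit_lt: "qdigit p i l < p" unfolding qdigit_def by simp

lemma dig_Vs[simp]: "dig N i \<in> Vs N"
  unfolding dig_def by (rule VsI) (auto simp: qdigit_lt less_imp_of_nat_less)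

lemma qdigit0: "qdigit p i 0 = i mod p" unfolding qdigit_def by simp
lemma qdigitS: "qdigit p i (Suc l) = qdigit p (i div p) l"
  unfolding qdigit_def by (simp add: div_mult2_eq)

lemma digits_inj: "i < p ^ N \<Longrightarrow> j < p ^ N \<Longrightarrow> (\<forall>l<N. qdigit p i l = qdigit p j l) \<Longrightarrow> i = j"
proof (induction N arbitrary: i j)
  case 0 thus ?case by simp
next
  case (Suc N)
  have "i div p < p ^ N" "j div p < p ^ N" using Suc.prems(1,2)
    by (simp_all add: div_less_iff_less_mult mult.commute)
  moreover have "\<forall>l<N. qdigit p (i div p) l = qdigit p (j div p) l"
    using Suc.prems(3) qdigitS by (metis Suc_mono)
  ultimately have "i div p = j div p" using Suc.IH by blast
  moreover have "i mod p = j mod p" using Suc.prems(3) qdigit0 by (metis zero_less_Suc)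
  ultimately show ?case by (metis div_mult_mod_eq)
qed

lemma dig_inj: "inj_on (dig N) {..<p ^ N}"
proof (rule inj_onI)
  fix i j assume i: "i \<in> {..<p ^ N}" and j: "j \<in> {..<p ^ N}" and e: "dig N i = dig N j"
  have "\<forall>l<N. qdigit p i l = qdigit p j l"
  proof (intro allI impI)
    fix l assume "l < N"
    thus "qdigit p i l = qdigit p j l" using fun_cong[OF e, of l] unfolding dig_def by simp
  qed
  thus "i = j" using digits_inj i j by auto
qed

lemma dig_bij: "bij_betw (dig N) {..<p ^ N} (Vs N)"
proof -
  have "dig N ` {..<p ^ N} \<subseteq> Vs N" by auto
  moreover have "card (dig N ` {..<p ^ N}) = card (Vs N)"
    using card_image[OF dig_inj] card_Vs by simp
  ultimately have "dig N ` {..<p ^ N} = Vs N" by (simp add: card_subset_eq)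
  thus ?thesis using dig_inj by (simp add: bij_betw_def)
qed

lemma idx_lt: "x \<in> Vs N \<Longrightarrow> idx N x < p ^ N"
  unfolding idx_def using dig_bij by (metis bij_betw_def inv_into_into lessThan_iff)
lemma dig_idx[simp]: "x \<in> Vs N \<Longrightarrow> dig N (idx N x) = x"
  unfolding idx_def using dig_bij by (metis bij_betw_def f_inv_into_f)
lemma idx_dig[simp]: "i < p ^ N \<Longrightarrow> idx N (dig N i) = i"
  unfolding idx_def using dig_inj by (simp add: inv_into_f_f)

lemma conv_Vs: "Fp_vec p N a \<Longrightarrow> conv N a \<in> Vs N"
  unfolding conv_def Fp_vec_def by (rule VsI) (auto simp: less_imp_of_nat_less)

lemma hweight_conv: "hweight N a = wt N (conv N a)"
  unfolding hweight_def wt_def conv_def by (rule arg_cong[where f=card]) auto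

lemma zeta_add: "zeta (a + b) = zeta a * zeta b"
  unfolding zeta_def cis_mult by (simp add: add_divide_distrib distrib_left)

lemma zeta_mult_P: "zeta (P * k) = 1"
proof -
  have "2 * pi * of_int (P * k) / real p = 2 * pi * of_int k" using p2 by simp
  thus ?thesis unfolding zeta_def by simp
qed

lemma zeta_mod: "zeta (a mod P) = zeta a"
proof -
  have "zeta a = zeta (a mod P + P * (a div P))" by simp
  also have "\<dots> = zeta (a mod P)" by (simp only: zeta_add zeta_mult_P mult_1_right)
  finally show ?thesis by simp
qed

lemma zeta_cong: "a mod P = b mod P \<Longrightarrow> zeta a = zeta b"
  by (metis zeta_mod)

lemma zeta_cnj: "cnj (zeta a) = zeta (- a)"
  unfolding zeta_def cis_cnj by simp

lemma zeta_one: "zeta a = 1 \<Longrightarrow> a mod P = 0"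
proof -
  assume z: "zeta a = 1"
  hence "cos (2 * pi * of_int a / real p) = 1" unfolding zeta_def
    by (metis Re_complex_of_real cis.sel(1) one_complex.sel(1))
  then obtain n :: int where n: "2 * pi * of_int a / real p = of_int n * 2 * pi"
    using cos_one_2pi_int by blast
  hence "real_of_int a = of_int n * real p" using p2 by (simp add: field_simps)
  hence "a = n * P" by (metis of_int_eq_iff of_int_mult of_int_of_nat_eq)
  thus ?thesis by simp
qed

lemma zeta_pow: "cis (2 * pi / real p) ^ n = zeta (int n)"
  unfolding zeta_def DeMoivre by (simp add: field_simps)

lemma Xcond:
  assumes a: "Fp_vec p N a" and i: "i < p ^ N" and j: "j < p ^ N"
  shows "(\<forall>l<N. qdigit p i l = (qdigit p j l + a l) mod p) \<longleftrightarrow> dig N j = vsub (dig N i) (conv N a)"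
proof
  assume h: "\<forall>l<N. qdigit p i l = (qdigit p j l + a l) mod p"
  show "dig N j = vsub (dig N i) (conv N a)"
  proof
    fix l show "dig N j l = vsub (dig N i) (conv N a) l"
    proof (cases "l < N")
      case True
      have "int (qdigit p i l) = (int (qdigit p j l) + int (a l)) mod P"
        using h True by (metis of_nat_add of_nat_mod)
      hence "(int (qdigit p i l) - int (a l)) mod P = int (qdigit p j l) mod P"
        by (metis add_diff_cancel_right' mod_diff_left_eq)
      also have "\<dots> = int (qdigit p j l)" using qdigit_lt[of i l] qdigit_lt[of j l] by simp
      finally show ?thesis unfolding dig_def vsub_def conv_def using True by simp
    qed (simp add: dig_def vsub_def conv_def)
  qed
next
  assume h: "dig N j = vsub (dig N i) (conv N a)"
  show "\<forall>l<N. qdigit p i l = (qdigit p j l + a l) mod p"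
  proof (intro allI impI)
    fix l assume l: "l < N"
    have "int (qdigit p j l) = (int (qdigit p i l) - int (a l)) mod P"
      using fun_cong[OF h, of l] l unfolding dig_def vsub_def conv_def by simp
    hence "int ((qdigit p j l + a l) mod p) = ((int (qdigit p i l) - int (a l)) mod P + int (a l)) mod P"
      by (simp add: of_nat_mod)
    also have "\<dots> = int (qdigit p i l) mod P" by (simp add: mod_simps)
    also have "\<dots> = int (qdigit p i l)" using qdigit_lt[of i l] by simp
    finally show "qdigit p i l = (qdigit p j l + a l) mod p" by simp
  qed
qed

lemma Xop_action:
  assumes a: "Fp_vec p N a" and w: "w \<in> carrier_vec (p ^ N)" and i: "i < p ^ N"
  shows "(Xop p N a *\<^sub>v w) $ i = w $ idx N (vsub (dig N i) (conv N a))"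
proof -
  define j0 where "j0 = idx N (vsub (dig N i) (conv N a))"
  have vV: "vsub (dig N i) (conv N a) \<in> Vs N" using conv_Vs[OF a] by simp
  have j0: "j0 < p ^ N" "dig N j0 = vsub (dig N i) (conv N a)" unfolding j0_def using vV idx_lt by auto
  have c: "\<And>j. j < p ^ N \<Longrightarrow> (\<forall>l<N. qdigit p i l = (qdigit p j l + a l) mod p) \<longleftrightarrow> j = j0"
  proof -
    fix j assume j: "j < p ^ N"
    have "(\<forall>l<N. qdigit p i l = (qdigit p j l + a l) mod p) \<longleftrightarrow> dig N j = dig N j0"
      using Xcond[OF a i j] j0(2) by simp
    also have "\<dots> \<longleftrightarrow> j = j0" using dig_inj j j0(1) by (auto simp: inj_on_def)
    finally show "?thesis j" .
  qed
  have "(Xop p N a *\<^sub>v w) $ i = (\<Sum>j\<in>{0..<p ^ N}. (if j = j0 then 1 else 0) * w $ j)"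
    unfolding Xop_def using i w c by (simp add: scalar_prod_def)
  also have "\<dots> = (\<Sum>j\<in>{0..<p ^ N}. if j = j0 then w $ j else 0)" by (rule sum.cong) auto
  also have "\<dots> = w $ j0" using j0(1) by simp
  finally show ?thesis unfolding j0_def .
qed

lemma dot_dig: "dot N (conv N b) (dig N j) = int (\<Sum>l<N. b l * qdigit p j l)"
  unfolding dot_def conv_def dig_def of_nat_sum by (rule sum.cong) auto

lemma Zop_action:
  assumes w: "w \<in> carrier_vec (p ^ N)" and i: "i < p ^ N"
  shows "(Zop p N b *\<^sub>v w) $ i = zeta (dot N (conv N b) (dig N i)) * w $ i"
proof -
  have "(Zop p N b *\<^sub>v w) $ i = (\<Sum>j\<in>{0..<p ^ N}. (if i = j then cis (2 * pi / real p) ^ (\<Sum>l<N. b l * qdigit p j l) else 0) * w $ j)"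
    unfolding Zop_def using i w by (simp add: scalar_prod_def)
  also have "\<dots> = (\<Sum>j\<in>{0..<p ^ N}. if j = i then cis (2 * pi / real p) ^ (\<Sum>l<N. b l * qdigit p j l) * w $ j else 0)"
    by (rule sum.cong) auto
  also have "\<dots> = cis (2 * pi / real p) ^ (\<Sum>l<N. b l * qdigit p i l) * w $ i"
    using i by simp
  finally show ?thesis unfolding zeta_pow dot_dig .
qed

lemma E_action:
  assumes a: "Fp_vec p N a" and w: "w \<in> carrier_vec (p ^ N)" and i: "i < p ^ N"
  shows "((Xop p N a * Zop p N b) *\<^sub>v w) $ i =
    zeta (dot N (conv N b) (vsub (dig N i) (conv N a))) * w $ idx N (vsub (dig N i) (conv N a))"
proof -
  have vV: "vsub (dig N i) (conv N a) \<in> Vs N" using conv_Vs[OF a] by simp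
  have X: "Xop p N a \<in> carrier_mat (p ^ N) (p ^ N)" unfolding Xop_def by simp
  have Z: "Zop p N b \<in> carrier_mat (p ^ N) (p ^ N)" unfolding Zop_def by simp
  have "((Xop p N a * Zop p N b) *\<^sub>v w) $ i = (Xop p N a *\<^sub>v (Zop p N b *\<^sub>v w)) $ i"
    using X Z w by simp
  also have "\<dots> = (Zop p N b *\<^sub>v w) $ idx N (vsub (dig N i) (conv N a))"
    by (rule Xop_action[OF a _ i]) (use Z w in auto)
  also have "\<dots> = zeta (dot N (conv N b) (vsub (dig N i) (conv N a))) * w $ idx N (vsub (dig N i) (conv N a))"
    using Zop_action[OF w idx_lt[OF vV]] vV by simp
  finally show ?thesis .
qed

lemma dim_row_Xop: "dim_row (Xop p N a) = p ^ N" unfolding Xop_def by simp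

lemma E_carrier: "(Xop p N a * Zop p N b) *\<^sub>v w \<in> carrier_vec (p ^ N)"
  by (rule carrier_vecI) (simp add: dim_row_Xop)

end


abbreviation VV :: "nat \<Rightarrow> (complex, complex vec) module" where
  "VV n \<equiv> module_vec TYPE(complex) n"

lemma span_subspace_dim:
  fixes B :: "complex vec set"
  assumes B: "B \<subseteq> carrier_vec n" "finite B" "\<not> LinearCombinations.module.lin_dep class_ring (VV n) B"
  shows "subspace class_ring (LinearCombinations.module.span class_ring (VV n) B) (VV n)"
    "vectorspace.dim class_ring ((VV n)\<lparr>carrier := LinearCombinations.module.span class_ring (VV n) B\<rparr>) = card B"
proof -
  interpret vec_space "TYPE(complex)" n .
  show "subspace class_ring (span B) V" using span_is_subspace B by simp
  have "maximal B (\<lambda>T. T \<subseteq> B \<and> lin_indpt T)" unfolding maximal_def using B by auto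
  thus "vectorspace.dim class_ring (V\<lparr>carrier := span B\<rparr>) = card B" using B by (intro dim_span) auto
qed

lemma span_index:
  fixes B :: "complex vec set"
  assumes B: "B \<subseteq> carrier_vec n" and v: "v \<in> LinearCombinations.module.span class_ring (VV n) B" and i: "i < n"
  shows "\<exists>A a. finite A \<and> A \<subseteq> B \<and> v $ i = (\<Sum>x\<in>A. a x * x $ i)"
proof -
  interpret vec_space "TYPE(complex)" n .
  obtain a A where "v = lincomb a A" "finite A" "A \<subseteq> B" using v unfolding span_def by auto
  thus ?thesis using lincomb_index[OF i, of A a] B by auto
qed

lemma span_carrier:
  fixes B :: "complex vec set"
  assumes B: "B \<subseteq> carrier_vec n" and v: "v \<in> LinearCombinations.module.span class_ring (VV n) B"
  shows "v \<in> carrier_vec n"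
proof -
  interpret vec_space "TYPE(complex)" n .
  show ?thesis using span_closed B v by simp
qed

lemma span_zero_at:
  fixes B :: "complex vec set"
  assumes B: "B \<subseteq> carrier_vec n" and v: "v \<in> LinearCombinations.module.span class_ring (VV n) B" and i: "i < n"
    and z: "\<And>b. b \<in> B \<Longrightarrow> b $ i = 0"
  shows "v $ i = 0"
proof -
  obtain A a where "finite A" "A \<subseteq> B" "v $ i = (\<Sum>x\<in>A. a x * x $ i)" using span_index[OF B v i] by blast
  thus ?thesis using z by (auto intro!: sum.neutral)
qed

lemma span_eq_at:
  fixes B :: "complex vec set"
  assumes B: "B \<subseteq> carrier_vec n" and v: "v \<in> LinearCombinations.module.span class_ring (VV n) B" and i: "i < n" and j: "j < n"
    and z: "\<And>b. b \<in> B \<Longrightarrow> b $ i = b $ j"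
  shows "v $ i = v $ j"
proof -
  interpret vec_space "TYPE(complex)" n .
  obtain a A where A: "v = lincomb a A" "finite A" "A \<subseteq> B" using v unfolding span_def by auto
  have "v $ i = (\<Sum>x\<in>A. a x * x $ i)" using lincomb_index[OF i, of A a] A B by auto
  also have "\<dots> = (\<Sum>x\<in>A. a x * x $ j)" using A z by (intro sum.cong) auto
  also have "\<dots> = v $ j" using lincomb_index[OF j, of A a] A B by auto
  finally show ?thesis .
qed

lemma lin_indep_sep:
  fixes B :: "complex vec set"
  assumes B: "B \<subseteq> carrier_vec n"
    and sep: "\<And>b. b \<in> B \<Longrightarrow> \<exists>i<n. b $ i \<noteq> 0 \<and> (\<forall>b'\<in>B. b' \<noteq> b \<longrightarrow> b' $ i = 0)"
  shows "\<not> LinearCombinations.module.lin_dep class_ring (VV n) B"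
proof
  interpret vec_space "TYPE(complex)" n .
  assume "lin_dep B"
  then obtain A a v where A: "finite A" "A \<subseteq> B" "lincomb a A = 0\<^sub>v n" "v \<in> A" "a v \<noteq> 0"
    unfolding lin_dep_def by auto
  obtain i where i: "i < n" "v $ i \<noteq> 0" "\<forall>b'\<in>B. b' \<noteq> v \<longrightarrow> b' $ i = 0" using sep A by blast
  have "0 = lincomb a A $ i" using A i by simp
  also have "\<dots> = (\<Sum>x\<in>A. a x * x $ i)" using lincomb_index[OF i(1), of A a] A B by auto
  also have "\<dots> = a v * v $ i"
  proof (rule sum.remove[OF A(1) A(4), THEN trans])
    have "(\<Sum>x\<in>A - {v}. a x * x $ i) = 0" using i A by (intro sum.neutral) auto
    thus "a v * v $ i + (\<Sum>x\<in>A - {v}. a x * x $ i) = a v * v $ i" by simp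
  qed
  finally show False using A(5) i(2) by simp
qed



locale css = pv +
  fixes N :: nat and C1 C2 :: "(nat \<Rightarrow> int) set" and dx dz :: nat
  assumes g1: "grp N C1" and g2: "grp N C2" and C21: "C2 \<subseteq> C1"
    and d1: "\<And>x. x \<in> C1 \<Longrightarrow> x \<noteq> zv \<Longrightarrow> dx \<le> wt N x"
    and d2: "\<And>x. x \<in> comp N C2 \<Longrightarrow> x \<notin> comp N C1 \<Longrightarrow> dz \<le> wt N x"
begin

abbreviation W where "W \<equiv> Vs N"

definition cs :: "(nat \<Rightarrow> int) \<Rightarrow> (nat \<Rightarrow> int) set" where
  "cs x = (\<lambda>c. vadd x c) ` C2"
definition CS where "CS = cs ` C1"
definition bv :: "(nat \<Rightarrow> int) set \<Rightarrow> complex vec" where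
  "bv K = vec (p ^ N) (\<lambda>i. if dig N i \<in> K then 1 else 0)"
definition BB where "BB = bv ` CS"
definition QQ where "QQ = LinearCombinations.module.span class_ring (VV (p ^ N)) BB"
definition Fw :: "complex vec \<Rightarrow> (nat \<Rightarrow> int) \<Rightarrow> complex" where
  "Fw w x = w $ idx N x"

lemma C1V: "C1 \<subseteq> W" and C2V: "C2 \<subseteq> W" using g1 g2 grpD by auto

lemma vsub_vadd_assoc: "vsub (vadd x c1) c = vadd x (vsub c1 c)"
  unfolding vsub_def vadd_def by (rule ext, simp only: mod_diff_left_eq mod_add_right_eq, simp add: algebra_simps)

lemma cs_sub: "x \<in> C1 \<Longrightarrow> cs x \<subseteq> C1"
  unfolding cs_def using C21 grpD(3)[OF g1] by auto

lemma cs_self: "x \<in> W \<Longrightarrow> x \<in> cs x"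
  unfolding cs_def using grpD(2)[OF g2] vadd_zv by force

lemma cs_shift: assumes x: "x \<in> W" and y: "y \<in> W" and c: "c \<in> C2"
  shows "vadd y c \<in> cs x \<longleftrightarrow> y \<in> cs x"
proof
  assume "vadd y c \<in> cs x"
  then obtain c1 where c1: "c1 \<in> C2" "vadd y c = vadd x c1" unfolding cs_def by auto
  have "y = vsub (vadd y c) c" using vsub_vadd[OF y] by simp
  also have "\<dots> = vadd x (vsub c1 c)" using c1 vsub_vadd_assoc by simp
  finally show "y \<in> cs x" unfolding cs_def using grp_vsub[OF g2 c1(1) c] by auto
next
  assume "y \<in> cs x"
  then obtain c1 where c1: "c1 \<in> C2" "y = vadd x c1" unfolding cs_def by auto
  hence "vadd y c = vadd x (vadd c1 c)" by (simp add: vadd_assoc)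
  thus "vadd y c \<in> cs x" unfolding cs_def using grpD(3)[OF g2 c1(1) c] by auto
qed

lemma cs_eq: assumes x: "x \<in> W" and y: "y \<in> cs x" shows "cs y = cs x"
proof -
  obtain c where c: "c \<in> C2" "y = vadd x c" using y unfolding cs_def by auto
  have yV: "y \<in> W" using c x C2V by auto
  show ?thesis
  proof
    show "cs y \<subseteq> cs x"
    proof
      fix z assume "z \<in> cs y"
      then obtain c' where c': "c' \<in> C2" "z = vadd y c'" unfolding cs_def by auto
      thus "z \<in> cs x" using cs_shift[OF x yV c'(1)] y by simp
    qed
    show "cs x \<subseteq> cs y"
    proof
      fix z assume z: "z \<in> cs x"
      obtain c' where c': "c' \<in> C2" "z = vadd x c'" using z unfolding cs_def by auto
      have zV: "z \<in> W" using c' x C2V by auto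
      have "vadd y (vsub c' c) = z"
        unfolding c(2) c'(2) vadd_def vsub_def by (rule ext, simp only: mod_add_right_eq mod_add_left_eq, simp add: algebra_simps)
      thus "z \<in> cs y" unfolding cs_def using grp_vsub[OF g2 c'(1) c(1)] by force
    qed
  qed
qed

lemma CS_disj: "K1 \<in> CS \<Longrightarrow> K2 \<in> CS \<Longrightarrow> K1 \<noteq> K2 \<Longrightarrow> K1 \<inter> K2 = {}"
proof (rule ccontr)
  assume K1: "K1 \<in> CS" and K2: "K2 \<in> CS" and ne: "K1 \<noteq> K2" and "K1 \<inter> K2 \<noteq> {}"
  then obtain y where y: "y \<in> K1" "y \<in> K2" by auto
  obtain x1 x2 where x: "x1 \<in> C1" "K1 = cs x1" "x2 \<in> C1" "K2 = cs x2" using K1 K2 unfolding CS_def by auto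
  have "cs y = K1" "cs y = K2" using cs_eq x y C1V by auto
  thus False using ne by simp
qed

lemma finite_C2: "finite C2" using C2V finite_Vs finite_subset by blast
lemma finite_C1: "finite C1" using C1V finite_Vs finite_subset by blast

lemma card_cs: "x \<in> W \<Longrightarrow> card (cs x) = card C2"
  unfolding cs_def
proof (rule card_image, rule inj_onI)
  fix c c' assume x: "x \<in> W" and c: "c \<in> C2" "c' \<in> C2" and e: "vadd x c = vadd x c'"
  have "vsub (vadd c x) x = vsub (vadd c' x) x" using e by (simp add: vadd_comm)
  thus "c = c'" using vsub_vadd c C2V by (metis subsetD)
qed

lemma Union_CS: "\<Union> CS = C1"
proof
  show "\<Union> CS \<subseteq> C1" unfolding CS_def using cs_sub by auto
  show "C1 \<subseteq> \<Union> CS" unfolding CS_def using cs_self C1V by auto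
qed

lemma card_CS: "card CS * card C2 = card C1"
proof -
  have "card C2 * card CS = card (\<Union> CS)"
  proof (rule card_partition)
    show "finite CS" unfolding CS_def using finite_C1 by simp
    show "finite (\<Union> CS)" using Union_CS finite_C1 by simp
    show "\<And>c. c \<in> CS \<Longrightarrow> card c = card C2" unfolding CS_def using card_cs C1V by auto
    show "\<And>c1 c2. c1 \<in> CS \<Longrightarrow> c2 \<in> CS \<Longrightarrow> c1 \<noteq> c2 \<Longrightarrow> c1 \<inter> c2 = {}" by (rule CS_disj)
  qed
  thus ?thesis using Union_CS by (simp add: mult.commute)
qed

lemma bv_carrier: "bv K \<in> carrier_vec (p ^ N)" unfolding bv_def by simp

lemma BB_carrier: "BB \<subseteq> carrier_vec (p ^ N)" unfolding BB_def using bv_carrier by auto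

lemma bv_idx: "x \<in> W \<Longrightarrow> bv K $ idx N x = (if x \<in> K then 1 else 0)"
  unfolding bv_def using idx_lt by simp

lemma bv_inj: "inj_on bv CS"
proof (rule inj_onI)
  fix K1 K2 assume K1: "K1 \<in> CS" and K2: "K2 \<in> CS" and e: "bv K1 = bv K2"
  obtain x1 where x1: "x1 \<in> C1" "K1 = cs x1" using K1 unfolding CS_def by auto
  have x1V: "x1 \<in> W" using x1 C1V by auto
  have "x1 \<in> K1" using cs_self[OF x1V] x1 by simp
  hence "x1 \<in> K2" using arg_cong[OF e, of "\<lambda>v. v $ idx N x1"] bv_idx[OF x1V] by (auto split: if_splits)
  thus "K1 = K2" using CS_disj[OF K1 K2] \<open>x1 \<in> K1\<close> by blast
qed

lemma card_BB: "card BB = card CS" unfolding BB_def using bv_inj by (simp add: card_image)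
lemma finite_BB: "finite BB" unfolding BB_def CS_def using finite_C1 by simp

lemma BB_indep: "\<not> LinearCombinations.module.lin_dep class_ring (VV (p ^ N)) BB"
proof (rule lin_indep_sep[OF BB_carrier])
  fix b assume "b \<in> BB"
  then obtain K where K: "K \<in> CS" "b = bv K" unfolding BB_def by auto
  obtain x where x: "x \<in> C1" "K = cs x" using K unfolding CS_def by auto
  have xV: "x \<in> W" using x C1V by auto
  have xK: "x \<in> K" using cs_self[OF xV] x by simp
  show "\<exists>i<p ^ N. b $ i \<noteq> 0 \<and> (\<forall>b'\<in>BB. b' \<noteq> b \<longrightarrow> b' $ i = 0)"
  proof (intro exI conjI ballI impI)
    show "idx N x < p ^ N" using idx_lt[OF xV] .
    show "b $ idx N x \<noteq> 0" using K bv_idx[OF xV] xK by simp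
    fix b' assume b': "b' \<in> BB" "b' \<noteq> b"
    then obtain K' where K': "K' \<in> CS" "b' = bv K'" unfolding BB_def by auto
    have "K' \<noteq> K" using K K' b' by auto
    hence "x \<notin> K'" using CS_disj[OF K'(1) K(1)] xK by blast
    thus "b' $ idx N x = 0" using K' bv_idx[OF xV] by simp
  qed
qed

lemma QQ_subspace: "subspace class_ring QQ (VV (p ^ N))"
  unfolding QQ_def using span_subspace_dim(1)[OF BB_carrier finite_BB BB_indep] .

lemma QQ_dim: "vectorspace.dim class_ring ((VV (p ^ N))\<lparr>carrier := QQ\<rparr>) = card CS"
  unfolding QQ_def using span_subspace_dim(2)[OF BB_carrier finite_BB BB_indep] card_BB by simp

lemma QQ_carrier: "u \<in> QQ \<Longrightarrow> u \<in> carrier_vec (p ^ N)"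
  unfolding QQ_def using span_carrier[OF BB_carrier] by blast

lemma QQ_zero: assumes u: "u \<in> QQ" and z: "z \<in> W" "z \<notin> C1" shows "Fw u z = 0"
  unfolding Fw_def
proof (rule span_zero_at[OF BB_carrier u[unfolded QQ_def] idx_lt[OF z(1)]])
  fix b assume "b \<in> BB"
  then obtain K where K: "K \<in> CS" "b = bv K" unfolding BB_def by auto
  obtain x where x: "x \<in> C1" "K = cs x" using K unfolding CS_def by auto
  have "z \<notin> K" using cs_sub[OF x(1)] x z by auto
  thus "b $ idx N z = 0" using K bv_idx[OF z(1)] by simp
qed

lemma QQ_shift: assumes u: "u \<in> QQ" and z: "z \<in> W" and c: "c \<in> C2" shows "Fw u (vadd z c) = Fw u z"
  unfolding Fw_def
proof (rule sym, rule span_eq_at[OF BB_carrier u[unfolded QQ_def] idx_lt[OF z] idx_lt])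
  show zc: "vadd z c \<in> W" using z c C2V by auto
  fix b assume "b \<in> BB"
  then obtain K where K: "K \<in> CS" "b = bv K" unfolding BB_def by auto
  obtain x where x: "x \<in> C1" "K = cs x" using K unfolding CS_def by auto
  have xV: "x \<in> W" using x C1V by auto
  show "b $ idx N z = b $ idx N (vadd z c)"
    using K x bv_idx[OF z] bv_idx[OF zc] cs_shift[OF xV z c] by simp
qed

end

context css begin

lemma bij_vadd: "a \<in> W \<Longrightarrow> bij_betw (\<lambda>z. vadd z a) W W"
proof (rule bij_betw_imageI)
  assume a: "a \<in> W"
  show "inj_on (\<lambda>z. vadd z a) W"
  proof (rule inj_onI)
    fix x y assume xy: "x \<in> W" "y \<in> W" "vadd x a = vadd y a"
    hence "vsub (vadd x a) a = vsub (vadd y a) a" by simp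
    thus "x = y" using vsub_vadd[OF xy(1), of a] vsub_vadd[OF xy(2), of a] by simp
  qed
  show "(\<lambda>z. vadd z a) ` W = W"
  proof
    show "(\<lambda>z. vadd z a) ` W \<subseteq> W" using a by auto
    show "W \<subseteq> (\<lambda>z. vadd z a) ` W"
    proof
      fix x assume x: "x \<in> W"
      have e: "x = (\<lambda>z. vadd z a) (vsub x a)" using vadd_vsub[OF x, of a] by (simp add: vadd_comm)
      show "x \<in> (\<lambda>z. vadd z a) ` W" by (rule image_eqI[where f="\<lambda>z. vadd z a" and x="vsub x a"]) (use e x a in simp_all)
    qed
  qed
qed

lemma vsub_vsub_self: "a \<in> W \<Longrightarrow> vsub z (vsub z a) = a"
  unfolding vsub_def by (rule ext, simp only: mod_diff_right_eq, simp add: Vs_mod)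

lemma sum_shift: "a \<in> W \<Longrightarrow> (\<Sum>z\<in>W. f (vadd z a)) = (\<Sum>z\<in>W. f z)"
  using sum.reindex_bij_betw[OF bij_vadd] by blast

lemma KL_core:
  assumes aV: "a \<in> W" and b1: "b1 \<in> W" and b2: "b2 \<in> W"
    and wa: "wt N a < dx" and wb: "wt N (vsub b2 b1) < dz"
  shows "\<exists>c. \<forall>u\<in>QQ. \<forall>v\<in>QQ.
     (\<Sum>z\<in>W. cnj (zeta (dot N b1 z) * Fw u z) * (zeta (dot N b2 (vsub z a)) * Fw v (vsub z a)))
     = c * (\<Sum>z\<in>W. cnj (Fw u z) * Fw v z)"
proof -
  define b where "b = vsub b2 b1"
  have bV: "b \<in> W" unfolding b_def using b1 b2 by auto
  show ?thesis
  proof (cases "a \<in> C2")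
    case False
    show ?thesis
    proof (rule exI[of _ 0], intro ballI)
      fix u v assume u: "u \<in> QQ" and v: "v \<in> QQ"
      have "\<And>z. z \<in> W \<Longrightarrow> cnj (zeta (dot N b1 z) * Fw u z) * (zeta (dot N b2 (vsub z a)) * Fw v (vsub z a)) = 0"
      proof -
        fix z assume z: "z \<in> W"
        show "cnj (zeta (dot N b1 z) * Fw u z) * (zeta (dot N b2 (vsub z a)) * Fw v (vsub z a)) = 0"
        proof (cases "z \<in> C1 \<and> vsub z a \<in> C1")
          case True
          hence "a \<in> C1" using grp_vsub[OF g1, of z "vsub z a"] vsub_vsub_self[OF aV] by simp
          moreover have "a \<noteq> zv" using False grpD(2)[OF g2] by auto
          ultimately have "dx \<le> wt N a" using d1 by simp
          thus ?thesis using wa by simp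
        next
          case False
          thus ?thesis using QQ_zero[OF u z] QQ_zero[OF v, of "vsub z a"] z aV by auto
        qed
      qed
      hence "(\<Sum>z\<in>W. cnj (zeta (dot N b1 z) * Fw u z) * (zeta (dot N b2 (vsub z a)) * Fw v (vsub z a))) = 0"
        by simp
      thus "(\<Sum>z\<in>W. cnj (zeta (dot N b1 z) * Fw u z) * (zeta (dot N b2 (vsub z a)) * Fw v (vsub z a)))
          = 0 * (\<Sum>z\<in>W. cnj (Fw u z) * Fw v z)" by simp
    qed
  next
    case True
    define kap where "kap = zeta (- dot N b2 a)"
    have nC2: "vneg a \<in> C2" using grpD(4)[OF g2 True] .
    have trm: "\<And>u v z. u \<in> QQ \<Longrightarrow> v \<in> QQ \<Longrightarrow> z \<in> W \<Longrightarrow>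
        cnj (zeta (dot N b1 z) * Fw u z) * (zeta (dot N b2 (vsub z a)) * Fw v (vsub z a))
        = kap * (zeta (dot N b z) * (cnj (Fw u z) * Fw v z))"
    proof -
      fix u v z assume u: "u \<in> QQ" and v: "v \<in> QQ" and z: "z \<in> W"
      have "Fw v (vsub z a) = Fw v z" using QQ_shift[OF v z nC2] by (simp add: vsub_eq)
      moreover have "zeta (dot N b2 (vsub z a)) = zeta (dot N b2 z) * kap"
        unfolding kap_def zeta_add[symmetric] by (rule zeta_cong) (simp add: dot_vsub_r)
      moreover have "zeta (dot N b z) = zeta (dot N b2 z) * zeta (- dot N b1 z)"
        unfolding zeta_add[symmetric] b_def by (rule zeta_cong) (simp add: dot_vsub_l)
      ultimately show "cnj (zeta (dot N b1 z) * Fw u z) * (zeta (dot N b2 (vsub z a)) * Fw v (vsub z a))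
        = kap * (zeta (dot N b z) * (cnj (Fw u z) * Fw v z))"
        by (simp add: zeta_cnj)
    qed
    show ?thesis
    proof (cases "b \<in> comp N C1")
      case True
      show ?thesis
      proof (intro exI ballI)
        fix u v assume u: "u \<in> QQ" and v: "v \<in> QQ"
        have "(\<Sum>z\<in>W. cnj (zeta (dot N b1 z) * Fw u z) * (zeta (dot N b2 (vsub z a)) * Fw v (vsub z a)))
            = (\<Sum>z\<in>W. kap * (cnj (Fw u z) * Fw v z))"
        proof (rule sum.cong[OF refl])
          fix z assume z: "z \<in> W"
          show "cnj (zeta (dot N b1 z) * Fw u z) * (zeta (dot N b2 (vsub z a)) * Fw v (vsub z a))
              = kap * (cnj (Fw u z) * Fw v z)"
          proof (cases "z \<in> C1")
            case True
            have "zeta (dot N b z) = zeta 0" using \<open>b \<in> comp N C1\<close> True comp_memD by (intro zeta_cong) auto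
            thus ?thesis using trm[OF u v z] by (simp add: zeta_def)
          next
            case False
            thus ?thesis using trm[OF u v z] QQ_zero[OF u z False] by simp
          qed
        qed
        thus "(\<Sum>z\<in>W. cnj (zeta (dot N b1 z) * Fw u z) * (zeta (dot N b2 (vsub z a)) * Fw v (vsub z a)))
            = kap * (\<Sum>z\<in>W. cnj (Fw u z) * Fw v z)" by (simp add: sum_distrib_left)
      qed
    next
      case nb: False
      show ?thesis
      proof (cases "\<exists>c\<in>C2. dot N b c mod P \<noteq> 0")
        case True
        then obtain c where c: "c \<in> C2" "dot N b c mod P \<noteq> 0" by auto
        have cV: "c \<in> W" using c C2V by auto
        show ?thesis
        proof (intro exI ballI)
          fix u v assume u: "u \<in> QQ" and v: "v \<in> QQ"
          define f where "f z = zeta (dot N b z) * (cnj (Fw u z) * Fw v z)" for z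
          define S where "S = (\<Sum>z\<in>W. f z)"
          have "S = (\<Sum>z\<in>W. f (vadd z c))" unfolding S_def by (rule sum_shift[OF cV, symmetric])
          also have "\<dots> = (\<Sum>z\<in>W. zeta (dot N b c) * f z)"
          proof (rule sum.cong[OF refl])
            fix z assume z: "z \<in> W"
            have "zeta (dot N b (vadd z c)) = zeta (dot N b z) * zeta (dot N b c)"
              unfolding zeta_add[symmetric] by (rule zeta_cong) (simp add: dot_vadd_r)
            thus "f (vadd z c) = zeta (dot N b c) * f z"
              unfolding f_def using QQ_shift[OF u z c(1)] QQ_shift[OF v z c(1)] by simp
          qed
          also have "\<dots> = zeta (dot N b c) * S" unfolding S_def by (simp add: sum_distrib_left)
          finally have "(1 - zeta (dot N b c)) * S = 0" by (simp add: algebra_simps)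
          moreover have "zeta (dot N b c) \<noteq> 1" using zeta_one c(2) by blast
          ultimately have S0: "S = 0" by simp
          have "(\<Sum>z\<in>W. cnj (zeta (dot N b1 z) * Fw u z) * (zeta (dot N b2 (vsub z a)) * Fw v (vsub z a)))
              = (\<Sum>z\<in>W. kap * f z)" unfolding f_def by (rule sum.cong[OF refl]) (rule trm[OF u v])
          also have "\<dots> = kap * S" unfolding S_def by (simp add: sum_distrib_left)
          finally show "(\<Sum>z\<in>W. cnj (zeta (dot N b1 z) * Fw u z) * (zeta (dot N b2 (vsub z a)) * Fw v (vsub z a)))
              = 0 * (\<Sum>z\<in>W. cnj (Fw u z) * Fw v z)" using S0 by simp
        qed
      next
        case False
        hence "b \<in> comp N C2" using bV by (intro comp_memI) auto
        hence "dz \<le> wt N b" using d2 nb by simp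
        thus ?thesis using wb b_def by simp
      qed
    qed
  qed
qed

end


context css begin

lemma cinner_Fw: assumes u: "u \<in> carrier_vec (p ^ N)" and v: "v \<in> carrier_vec (p ^ N)"
  shows "cinner u v = (\<Sum>x\<in>W. cnj (Fw u x) * Fw v x)"
proof -
  have "cinner u v = (\<Sum>i\<in>{..<p ^ N}. cnj (Fw u (dig N i)) * Fw v (dig N i))"
    unfolding cinner_def Fw_def using u v by (intro sum.cong) auto
  also have "\<dots> = (\<Sum>x\<in>W. cnj (Fw u x) * Fw v x)"
    by (rule sum.reindex_bij_betw[OF dig_bij])
  finally show ?thesis .
qed

lemma vsub_vadd_vsub: "vsub (vadd z a1) a2 = vsub z (vsub a2 a1)"
  unfolding vsub_def vadd_def by (rule ext, simp only: mod_diff_left_eq mod_diff_right_eq, simp add: algebra_simps)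

lemma cinner_E:
  assumes a1: "Fp_vec p N a1" and a2: "Fp_vec p N a2"
    and u: "u \<in> carrier_vec (p ^ N)" and v: "v \<in> carrier_vec (p ^ N)"
  shows "cinner ((Xop p N a1 * Zop p N b1) *\<^sub>v u) ((Xop p N a2 * Zop p N b2) *\<^sub>v v) =
    (\<Sum>z\<in>W. cnj (zeta (dot N (conv N b1) z) * Fw u z) *
       (zeta (dot N (conv N b2) (vsub z (vsub (conv N a2) (conv N a1)))) * Fw v (vsub z (vsub (conv N a2) (conv N a1)))))"
proof -
  define A1 where "A1 = conv N a1"
  define A2 where "A2 = conv N a2"
  have A1V: "A1 \<in> W" and A2V: "A2 \<in> W" unfolding A1_def A2_def using conv_Vs a1 a2 by auto
  define H where "H x = cnj (zeta (dot N (conv N b1) (vsub x A1)) * Fw u (vsub x A1)) *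
        (zeta (dot N (conv N b2) (vsub x A2)) * Fw v (vsub x A2))" for x
  have "cinner ((Xop p N a1 * Zop p N b1) *\<^sub>v u) ((Xop p N a2 * Zop p N b2) *\<^sub>v v)
      = (\<Sum>i\<in>{..<p ^ N}. H (dig N i))"
    unfolding cinner_def
  proof (rule sum.cong)
    show "{..<dim_vec ((Xop p N a1 * Zop p N b1) *\<^sub>v u)} = {..<p ^ N}"
      using E_carrier by (metis carrier_vecD)
    fix i assume "i \<in> {..<p ^ N}"
    hence i: "i < p ^ N" by simp
    show "cnj (((Xop p N a1 * Zop p N b1) *\<^sub>v u) $ i) * ((Xop p N a2 * Zop p N b2) *\<^sub>v v) $ i = H (dig N i)"
      unfolding H_def Fw_def A1_def A2_def using E_action[OF a1 u i] E_action[OF a2 v i] by simp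
  qed
  also have "\<dots> = (\<Sum>x\<in>W. H x)" by (rule sum.reindex_bij_betw[OF dig_bij])
  also have "\<dots> = (\<Sum>z\<in>W. H (vadd z A1))" by (rule sum_shift[OF A1V, symmetric])
  also have "\<dots> = (\<Sum>z\<in>W. cnj (zeta (dot N (conv N b1) z) * Fw u z) *
       (zeta (dot N (conv N b2) (vsub z (vsub A2 A1))) * Fw v (vsub z (vsub A2 A1))))"
    unfolding H_def by (intro sum.cong refl) (simp add: vsub_vadd vsub_vadd_vsub)
  finally show ?thesis unfolding A1_def A2_def .
qed

lemma css_corrects: assumes ex: "2 * ex < dx" and ez: "2 * ez < dz"
  shows "corrects QQ (error_set p N ex ez)"
  unfolding corrects_def
proof (intro ballI)
  fix E1 E2 assume E1: "E1 \<in> error_set p N ex ez" and E2: "E2 \<in> error_set p N ex ez"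
  obtain a1 b1 where e1: "E1 = Xop p N a1 * Zop p N b1" "Fp_vec p N a1" "Fp_vec p N b1"
    "hweight N a1 \<le> ex" "hweight N b1 \<le> ez"
    using E1 unfolding error_set_def by blast
  obtain a2 b2 where e2: "E2 = Xop p N a2 * Zop p N b2" "Fp_vec p N a2" "Fp_vec p N b2"
    "hweight N a2 \<le> ex" "hweight N b2 \<le> ez"
    using E2 unfolding error_set_def by blast
  define a where "a = vsub (conv N a2) (conv N a1)"
  have aV: "a \<in> W" unfolding a_def using conv_Vs e1 e2 by simp
  have B1: "conv N b1 \<in> W" and B2: "conv N b2 \<in> W" using conv_Vs e1 e2 by auto
  have "wt N a \<le> wt N (conv N a2) + wt N (conv N a1)" unfolding a_def
    by (rule wt_vsub) (use conv_Vs e1 in auto)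
  hence wa: "wt N a < dx" using e1(4) e2(4) ex unfolding hweight_conv by linarith
  have "wt N (vsub (conv N b2) (conv N b1)) \<le> wt N (conv N b2) + wt N (conv N b1)"
    by (rule wt_vsub[OF B1])
  hence wb: "wt N (vsub (conv N b2) (conv N b1)) < dz" using e1(5) e2(5) ez unfolding hweight_conv by linarith
  obtain c where c: "\<forall>u\<in>QQ. \<forall>v\<in>QQ.
     (\<Sum>z\<in>W. cnj (zeta (dot N (conv N b1) z) * Fw u z) * (zeta (dot N (conv N b2) (vsub z a)) * Fw v (vsub z a)))
     = c * (\<Sum>z\<in>W. cnj (Fw u z) * Fw v z)"
    using KL_core[OF aV B1 B2 wa wb] by blast
  show "\<exists>c. \<forall>u\<in>QQ. \<forall>v\<in>QQ. cinner (E1 *\<^sub>v u) (E2 *\<^sub>v v) = c * cinner u v"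
  proof (intro exI ballI)
    fix u v assume u: "u \<in> QQ" and v: "v \<in> QQ"
    have uc: "u \<in> carrier_vec (p ^ N)" and vc: "v \<in> carrier_vec (p ^ N)" using QQ_carrier u v by auto
    have "cinner (E1 *\<^sub>v u) (E2 *\<^sub>v v) =
      (\<Sum>z\<in>W. cnj (zeta (dot N (conv N b1) z) * Fw u z) * (zeta (dot N (conv N b2) (vsub z a)) * Fw v (vsub z a)))"
      unfolding e1(1) e2(1) a_def by (rule cinner_E[OF e1(2) e2(2) uc vc])
    also have "\<dots> = c * (\<Sum>z\<in>W. cnj (Fw u z) * Fw v z)" using c u v by blast
    also have "\<dots> = c * cinner u v" using cinner_Fw[OF uc vc] by simp
    finally show "cinner (E1 *\<^sub>v u) (E2 *\<^sub>v v) = c * cinner u v" .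
  qed
qed

end


lemma kRM0: "kRM 0 r = 1"
  by (induction r) (auto simp: kRM_def)

lemma kRM_pascal: "kRM (Suc m) (Suc r) = kRM m (Suc r) + kRM m r"
proof (induction r)
  case 0 thus ?case by (simp add: kRM_def)
next
  case (Suc r)
  have "kRM (Suc m) (Suc (Suc r)) = kRM (Suc m) (Suc r) + (Suc m choose Suc (Suc r))"
    unfolding kRM_def by simp
  also have "\<dots> = kRM m (Suc r) + kRM m r + (m choose Suc r) + (m choose Suc (Suc r))"
    using Suc.IH by simp
  also have "\<dots> = kRM m (Suc (Suc r)) + kRM m (Suc r)"
    unfolding kRM_def by simp
  finally show ?case .
qed

lemma kRM_Suc0: "kRM (Suc m) 0 = kRM m 0" by (simp add: kRM_def)

lemma cc_kRM: "1 \<le> s \<Longrightarrow> cc s m + kRM m (s - 1) = 2 ^ m"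
proof (induction m arbitrary: s)
  case 0 thus ?case by (simp add: kRM0)
next
  case (Suc m)
  show ?case
  proof (cases "s = 1")
    case True
    have "cc 1 m + kRM m 0 = 2 ^ m" using Suc.IH[of 1] by simp
    thus ?thesis using True by (simp add: cc0 kRM_Suc0)
  next
    case False
    define r where "r = s - 2"
    have r: "s = Suc (Suc r)" unfolding r_def using Suc.prems False by simp
    have "cc s m + kRM m (Suc r) = 2 ^ m" using Suc.IH[of s] r by simp
    moreover have "cc (Suc r) m + kRM m r = 2 ^ m" using Suc.IH[of "Suc r"] by simp
    ultimately show ?thesis using r by (simp add: kRM_pascal)
  qed
qed

lemma kRM_mono: "r1 \<le> r2 \<Longrightarrow> kRM m r1 \<le> kRM m r2"
  unfolding kRM_def by (rule sum_mono2) auto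

theorem theorem11:
  fixes m r1 r2 p t :: nat
  assumes "m \<ge> 1" and "r1 < r2" and "r2 \<le> m"
    and "prime p" and "odd p" and "t \<ge> 1"
  shows "\<exists>dz dx Q. dz \<ge> 2 ^ (m - r2) \<and> dx \<ge> 2 ^ (r1 + 1) \<and>
           is_AQECC p (t * 2 ^ m) (t * (kRM m r2 - kRM m r1)) dz dx Q"
proof -
  have p2: "2 \<le> p" using assms(4) prime_ge_2_nat by blast
  interpret pv p using p2 by unfold_locales
  define N where "N = t * 2 ^ m"
  define C1 where "C1 = comp N (R t (Suc r1) m)"
  define C2 where "C2 = comp N (R t (Suc r2) m)"
  define dx :: nat where "dx = 2 ^ (r1 + 1)"
  define dz :: nat where "dz = 2 ^ (m - r2)"
  have css: "css p N C1 C2 dx dz"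
  proof (unfold_locales)
    show "grp N C1" unfolding C1_def by (rule comp_grp)
    show "grp N C2" unfolding C2_def by (rule comp_grp)
    show "C2 \<subseteq> C1" unfolding C1_def C2_def using assms(2) by (intro comp_anti R_mono) simp
    fix x
    show "x \<in> C1 \<Longrightarrow> x \<noteq> zv \<Longrightarrow> dx \<le> wt N x"
      unfolding C1_def dx_def N_def using comp_R_dist[of "Suc r1" m x t] assms(2,3) by simp
    assume x2: "x \<in> comp N C2" and x1: "x \<notin> comp N C1"
    have xR: "x \<in> R t (Suc r2) m" using x2 comp_comp_R unfolding C2_def N_def by simp
    have "x \<noteq> zv" using x1 comp_grp grpD by blast
    thus "dz \<le> wt N x" using R_dist[of "Suc r2" m x t] xR assms(3) unfolding dz_def N_def by simp
  qed
  interpret css p N C1 C2 dx dz by (rule css)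
  define K where "K = t * (kRM m r2 - kRM m r1)"
  have k1: "cc (Suc r1) m + kRM m r1 = 2 ^ m" using cc_kRM[of "Suc r1" m] by simp
  have k2: "cc (Suc r2) m + kRM m r2 = 2 ^ m" using cc_kRM[of "Suc r2" m] by simp
  have km: "kRM m r1 \<le> kRM m r2" using kRM_mono assms(2) by simp
  have ccle: "cc (Suc r2) m \<le> cc (Suc r1) m" using k1 k2 km by linarith
  have kd: "kRM m r2 - kRM m r1 = cc (Suc r1) m - cc (Suc r2) m" using k1 k2 km by linarith
  have Kc: "K = t * cc (Suc r1) m - t * cc (Suc r2) m" unfolding K_def kd
    by (simp add: diff_mult_distrib2)
  have cC1: "card C1 = p ^ (t * cc (Suc r1) m)" unfolding C1_def N_def by (rule card_comp_R)
  have cC2: "card C2 = p ^ (t * cc (Suc r2) m)" unfolding C2_def N_def by (rule card_comp_R)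
  have "t * cc (Suc r2) m \<le> t * cc (Suc r1) m" using ccle by simp
  hence "p ^ (t * cc (Suc r1) m) = p ^ K * p ^ (t * cc (Suc r2) m)"
    unfolding Kc by (simp add: power_add[symmetric])
  hence "card CS * card C2 = p ^ K * card C2" using card_CS cC1 cC2 by simp
  moreover have "card C2 > 0" using cC2 p2 by simp
  ultimately have cCS: "card CS = p ^ K" by simp
  have half: "\<And>d::nat. 0 < d \<Longrightarrow> 2 * ((d - 1) div 2) < d" by presburger
  have "2 * ((dx - 1) div 2) < dx" by (rule half) (simp add: dx_def)
  moreover have "2 * ((dz - 1) div 2) < dz" by (rule half) (simp add: dz_def)
  ultimately have cor: "corrects QQ (error_set p N ((dx - 1) div 2) ((dz - 1) div 2))"
    using css_corrects by blast
  have "is_AQECC p N K dz dx QQ"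
    unfolding is_AQECC_def using QQ_subspace QQ_dim cCS cor by simp
  thus ?thesis unfolding N_def K_def dx_def dz_def by blast
qed


end
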